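(* Let $(\mathcal H,\mathcal B)$ be a commutative nondegenerate combinatorial Hopf algebra over $\mathbb R$, let $\gamma\in(0,1]$ and $N:=\lfloor 1/\gamma\rfloor$. Then every $\gamma$-regular $N$-truncated $\mathcal H$-rough path admits a unique extension to a $\gamma$-regular $\mathcal H$-rough path $\mathbb X$. Moreover, there exists a constant $c>0$ such that $$|\langle\mathbb X_{st},\sigma\rangle|\le c^{|\sigma|}\,q_\gamma(\sigma)\,|t-s|^{\gamma|\sigma|}$$ for all $s,t\in\mathbb R$ and all $\sigma\in\mathcal B$.
   Context: A connected graded Hopf algebra $\mathcal H=\bigoplus_{n\ge0}\mathcal H_n$ has $\mathcal H_0=\mathbb R\mathbf 1$; $|\sigma|$ is the degree of a homogeneous $\sigma$; reduced coproduct $\Delta'(\sigma)=\Delta(\sigma)-\sigma\otimes\mathbf 1-\mathbf 1\otimes\sigma=\sum'_{(\sigma)}\sigma'\otimes\sigma''$ (homogeneous components); convolution $(\phi*\psi)(x)=\sum_{(x)}\phi(x_1)\psi(x_2)$. A combinatorial Hopf algebra $(\mathcal H,\mathcal B)$ is a connected graded Hopf algebra with a basis $\mathcal B=\bigsqcup_n\mathcal B_n$, $\mathcal B_n$ a basis of $\mathcal H_n$, such that $\dim\mathcal H_n\le bC^n$ for some constants $b,C>0$, and the structure constants of product and coproduct in this basis are nonnegative integers. Its inverse-factorial character $q$ is the linear form with $q(\mathbf 1)=1$, $q(\tau)=1$ for $\tau\in\mathcal B_1$, and $q(x)=\frac{1}{2^{|x|}-2}\sum'_{(x)}q(x')q(x'')$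 for homogeneous $x$ of degree $\ge2$. It is nondegenerate if $\mathcal B\cap\mathrm{Prim}(\mathcal H)=\mathcal B_1$. The map $q_\gamma:\mathcal H\to\mathbb R$ is the linear map defined on $\mathcal B$ by $q_\gamma(\sigma)=q(\sigma)$ if $|\sigma|\le N$ and recursively $q_\gamma(\sigma)=\frac{1}{2^{\gamma|\sigma|}-2}\sum'_{(\sigma)}q_\gamma(\sigma')q_\gamma(\sigma'')$ if $|\sigma|\ge N+1$ (note $\gamma(N+1)>1$). A $\gamma$-regular $\mathcal H$-rough path is a family $(\mathbb X_{st})_{s,t\in\mathbb R}$ of linear forms on $\mathcal H$ with $\langle\mathbb X_{st},\mathbf 1\rangle=1$ such that (I) $\langle\mathbb X_{st},\sigma\tau\rangle=\langle\mathbb X_{st},\sigma\rangle\langle\mathbb X_{st},\tau\rangle$ for all $\sigma,\tau\in\mathcal H$; (II) $\mathbb X_{su}*\mathbb X_{ut}=\mathbb X_{st}$ for all $s,u,t$; (III) $\sup_{s\neq t}|\langle\mathbb X_{st},\sigma\rangle|/|t-s|^{\gamma|\sigma|}<\infty$ for every $\sigma\in\mathcal B$. With $\mathcal H^{(N)}=\bigoplus_{k\le N}\mathcal H_k$, a $\gamma$-regular $N$-truncated $\mathcal H$-rough path is a family of linear forms on $\mathcal H^{(N)}$ with $\langle\mathbb X_{st},\mathbf 1\rangle=1$ satisfying (I) for $\sigma\in\mathcal H_p,\tau\in\mathcal H_q$ with $p+q\le N$, (II) with the coproduct restricted to $\mathcal H^{(N)}$, and (III) for $\sigma\in\mathcal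 B_n$, $n\le N$. An extension means a $\gamma$-regular $\mathcal H$-rough path whose restriction to $\mathcal H^{(N)}$ is the given truncated one. *)

theory Defs
  imports Complex_Main
begin

text \<open>
A combinatorial Hopf algebra is represented through its basis: elements of a type 'b,
a degree function deg, the unit basis element one, and nonnegative integer structure constants
  mult a b c   = coefficient of c in the product a b,
  comult a b c = coefficient of a (x) b in the coproduct of c.
The Hopf algebra itself is the real span of the basis; a linear form on it is the same as a
function 'b => real (its values on the basis).
\<close>

definition Bn :: "('b \<Rightarrow> nat) \<Rightarrow> nat \<Rightarrow> 'b set" where
  "Bn deg n = {x. deg x = n}"

definition Ble :: "('b \<Rightarrow> nat) \<Rightarrow> nat \<Rightarrow> 'b set" where
  "Ble deg n = {x. deg x \<le> n}"

definition comb_hopf ::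
  "'b \<Rightarrow> ('b \<Rightarrow> nat) \<Rightarrow> ('b \<Rightarrow> 'b \<Rightarrow> 'b \<Rightarrow> nat) \<Rightarrow> ('b \<Rightarrow> 'b \<Rightarrow> 'b \<Rightarrow> nat) \<Rightarrow> bool" where
  "comb_hopf one deg mult comult \<longleftrightarrow>
     (\<forall>n. finite (Bn deg n)) \<and>
     (\<exists>b0 C::real. b0 > 0 \<and> C > 0 \<and> (\<forall>n. real (card (Bn deg n)) \<le> b0 * C ^ n)) \<and>
     Bn deg 0 = {one} \<and>
     (\<forall>a b c. mult a b c \<noteq> 0 \<longrightarrow> deg c = deg a + deg b) \<and>
     (\<forall>a b c. comult a b c \<noteq> 0 \<longrightarrow> deg a + deg b = deg c) \<and>
     (\<forall>a c. mult one a c = (if c = a then 1 else 0) \<and> mult a one c = (if c = a then 1 else 0)) \<and>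
     (\<forall>a c. comult one a c = (if a = c then 1 else 0) \<and> comult a one c = (if a = c then 1 else 0)) \<and>
     (\<forall>a b c e. (\<Sum>d\<in>Bn deg (deg a + deg b). mult a b d * mult d c e)
                = (\<Sum>d\<in>Bn deg (deg b + deg c). mult b c d * mult a d e)) \<and>
     (\<forall>x y z e. (\<Sum>d\<in>Bn deg (deg x + deg y). comult x y d * comult d z e)
                = (\<Sum>d\<in>Bn deg (deg y + deg z). comult y z d * comult x d e)) \<and>
     (\<forall>a b x y. (\<Sum>c\<in>Bn deg (deg a + deg b). mult a b c * comult x y c)
                = (\<Sum>a1\<in>Ble deg (deg a). \<Sum>a2\<in>Ble deg (deg a).
                   \<Sum>b1\<in>Ble deg (deg b). \<Sum>b2\<in>Ble deg (deg b).
                     comult a1 a2 a * comult b1 b2 b * mult a1 b1 x * mult a2 b2 y))"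

definition commutative_hopf :: "('b \<Rightarrow> 'b \<Rightarrow> 'b \<Rightarrow> nat) \<Rightarrow> bool" where
  "commutative_hopf mult \<longleftrightarrow> (\<forall>a b c. mult a b c = mult b a c)"

definition primitive :: "'b \<Rightarrow> ('b \<Rightarrow> 'b \<Rightarrow> 'b \<Rightarrow> nat) \<Rightarrow> 'b \<Rightarrow> bool" where
  "primitive one comult \<sigma> \<longleftrightarrow>
     (\<forall>a b. comult a b \<sigma> = (if a = \<sigma> \<and> b = one then 1 else 0) + (if a = one \<and> b = \<sigma> then 1 else 0))"

definition nondegenerate :: "'b \<Rightarrow> ('b \<Rightarrow> nat) \<Rightarrow> ('b \<Rightarrow> 'b \<Rightarrow> 'b \<Rightarrow> nat) \<Rightarrow> bool" where
  "nondegenerate one deg comult \<longleftrightarrow> (\<forall>\<sigma>. primitive one comult \<sigma> \<longleftrightarrow> deg \<sigma> = 1)"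

definition red_sum :: "('b \<Rightarrow> nat) \<Rightarrow> ('b \<Rightarrow> 'b \<Rightarrow> 'b \<Rightarrow> nat) \<Rightarrow> ('b \<Rightarrow> real) \<Rightarrow> ('b \<Rightarrow> real) \<Rightarrow> 'b \<Rightarrow> real" where
  "red_sum deg comult f g \<sigma> =
     (\<Sum>a\<in>{a. 0 < deg a \<and> deg a < deg \<sigma>}. \<Sum>b\<in>{b. 0 < deg b \<and> deg b < deg \<sigma>}.
        real (comult a b \<sigma>) * f a * g b)"

primrec qtab :: "(nat \<Rightarrow> real) \<Rightarrow> ('b \<Rightarrow> nat) \<Rightarrow> ('b \<Rightarrow> 'b \<Rightarrow> 'b \<Rightarrow> nat) \<Rightarrow> nat \<Rightarrow> 'b \<Rightarrow> real" where
  "qtab e deg comult 0 \<sigma> = (if deg \<sigma> = 0 then 1 else 0)"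
| "qtab e deg comult (Suc n) \<sigma> =
     (if deg \<sigma> \<le> n then qtab e deg comult n \<sigma>
      else if deg \<sigma> = Suc n then
        (if n = 0 then 1
         else (1 / (2 powr (e (Suc n)) - 2)) *
                red_sum deg comult (qtab e deg comult n) (qtab e deg comult n) \<sigma>)
      else 0)"

definition qchar :: "('b \<Rightarrow> nat) \<Rightarrow> ('b \<Rightarrow> 'b \<Rightarrow> 'b \<Rightarrow> nat) \<Rightarrow> 'b \<Rightarrow> real" where
  "qchar deg comult \<sigma> = qtab (\<lambda>m. real m) deg comult (deg \<sigma>) \<sigma>"

definition qgamma :: "real \<Rightarrow> nat \<Rightarrow> ('b \<Rightarrow> nat) \<Rightarrow> ('b \<Rightarrow> 'b \<Rightarrow> 'b \<Rightarrow> nat) \<Rightarrow> 'b \<Rightarrow> real" where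
  "qgamma \<gamma> N deg comult \<sigma> =
     qtab (\<lambda>m. if m \<le> N then real m else \<gamma> * real m) deg comult (deg \<sigma>) \<sigma>"

definition rough_path ::
  "real \<Rightarrow> 'b \<Rightarrow> ('b \<Rightarrow> nat) \<Rightarrow> ('b \<Rightarrow> 'b \<Rightarrow> 'b \<Rightarrow> nat) \<Rightarrow> ('b \<Rightarrow> 'b \<Rightarrow> 'b \<Rightarrow> nat)
     \<Rightarrow> (real \<Rightarrow> real \<Rightarrow> 'b \<Rightarrow> real) \<Rightarrow> bool" where
  "rough_path \<gamma> one deg mult comult X \<longleftrightarrow>
     (\<forall>s t. X s t one = 1) \<and>
     (\<forall>s t a b. (\<Sum>c\<in>Bn deg (deg a + deg b). real (mult a b c) * X s t c) = X s t a * X s t b) \<and>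
     (\<forall>s u t c. X s t c = (\<Sum>a\<in>Ble deg (deg c). \<Sum>b\<in>Ble deg (deg c).
                             real (comult a b c) * X s u a * X u t b)) \<and>
     (\<forall>\<sigma>. \<exists>K. \<forall>s t. s \<noteq> t \<longrightarrow> \<bar>X s t \<sigma>\<bar> \<le> K * \<bar>t - s\<bar> powr (\<gamma> * real (deg \<sigma>)))"

definition trunc_rough_path ::
  "real \<Rightarrow> nat \<Rightarrow> 'b \<Rightarrow> ('b \<Rightarrow> nat) \<Rightarrow> ('b \<Rightarrow> 'b \<Rightarrow> 'b \<Rightarrow> nat) \<Rightarrow> ('b \<Rightarrow> 'b \<Rightarrow> 'b \<Rightarrow> nat)
     \<Rightarrow> (real \<Rightarrow> real \<Rightarrow> 'b \<Rightarrow> real) \<Rightarrow> bool" where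
  "trunc_rough_path \<gamma> N one deg mult comult X \<longleftrightarrow>
     (\<forall>s t. X s t one = 1) \<and>
     (\<forall>s t a b. deg a + deg b \<le> N \<longrightarrow>
        (\<Sum>c\<in>Bn deg (deg a + deg b). real (mult a b c) * X s t c) = X s t a * X s t b) \<and>
     (\<forall>s u t c. deg c \<le> N \<longrightarrow> X s t c = (\<Sum>a\<in>Ble deg (deg c). \<Sum>b\<in>Ble deg (deg c).
                             real (comult a b c) * X s u a * X u t b)) \<and>
     (\<forall>\<sigma>. deg \<sigma> \<le> N \<longrightarrow>
        (\<exists>K. \<forall>s t. s \<noteq> t \<longrightarrow> \<bar>X s t \<sigma>\<bar> \<le> K * \<bar>t - s\<bar> powr (\<gamma> * real (deg \<sigma>))))"

definition extends_trunc :: "nat \<Rightarrow> ('b \<Rightarrow> nat) \<Rightarrow> (real \<Rightarrow> real \<Rightarrow> 'b \<Rightarrow> real) \<Rightarrow> (real \<Rightarrow> real \<Rightarrow> 'b \<Rightarrow> real) \<Rightarrow> bool" where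
  "extends_trunc N deg X Y \<longleftrightarrow> (\<forall>s t \<sigma>. deg \<sigma> \<le> N \<longrightarrow> X s t \<sigma> = Y s t \<sigma>)"

text \<open>|x|^a with the convention 0^0 = 1 (Isabelle has 0 powr 0 = 0).\<close>
definition hpow :: "real \<Rightarrow> real \<Rightarrow> real" where
  "hpow x a = (if a = 0 then 1 else x powr a)"

end

theory Submission
  imports Defs
begin

lemma dyadic_bound:
  fixes Z F :: "real \<Rightarrow> real \<Rightarrow> real" and B K \<theta> :: real
  assumes th: "\<theta> > 1" and B: "B \<ge> 0"
    and split: "\<And>s t. Z s t = Z s ((s+t)/2) + Z ((s+t)/2) t + F s t"
    and Fb: "\<And>s t. \<bar>F s t\<bar> \<le> B * \<bar>t-s\<bar> powr \<theta>"
    and Zb: "\<And>s t. \<bar>Z s t\<bar> \<le> K * \<bar>t-s\<bar> powr \<theta>"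
  shows "\<bar>Z s t\<bar> \<le> B / (1 - 2 powr (1-\<theta>)) * \<bar>t-s\<bar> powr \<theta>"
proof -
  define r where "r = (2::real) powr (1-\<theta>)"
  have r0: "0 < r" unfolding r_def by simp
  have r1: "r < 1" unfolding r_def using th by (simp add: powr_less_one)
  have half: "(\<bar>t - s\<bar>/2) powr \<theta> * 2 = r * \<bar>t-s\<bar> powr \<theta>" for s t :: real
  proof -
    have "(\<bar>t - s\<bar>/2) powr \<theta> = \<bar>t-s\<bar> powr \<theta> / 2 powr \<theta>" by (simp add: powr_divide)
    moreover have "2 / 2 powr \<theta> = r" unfolding r_def by (simp add: powr_diff)
    ultimately show ?thesis by (metis (no_types, lifting) mult.commute times_divide_eq_left times_divide_eq_right)
  qed
  have claim: "\<forall>s t. \<bar>Z s t\<bar> \<le> (B * (1 - r^k)/(1-r) + K * r^k) * \<bar>t-s\<bar> powr \<theta>" for k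
  proof (induction k)
    case 0 then show ?case using Zb by simp
  next
    case (Suc k)
    show ?case
    proof (intro allI)
      fix s t :: real
      define m where "m = (s+t)/2"
      define c where "c = B * (1 - r^k)/(1-r) + K * r^k"
      have d0: "m - s = (t-s)/2" "t - m = (t-s)/2" unfolding m_def by (simp_all add: field_simps)
      have d1: "\<bar>m - s\<bar> = \<bar>t-s\<bar>/2" "\<bar>t - m\<bar> = \<bar>t-s\<bar>/2" unfolding d0 by simp_all
      have "\<bar>Z s t\<bar> \<le> \<bar>Z s m\<bar> + \<bar>Z m t\<bar> + \<bar>F s t\<bar>" using split[of s t] unfolding m_def by linarith
      also have "\<dots> \<le> c * (\<bar>t-s\<bar>/2) powr \<theta> + c * (\<bar>t-s\<bar>/2) powr \<theta> + B * \<bar>t-s\<bar> powr \<theta>"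
        using Suc.IH[rule_format, of s m] Suc.IH[rule_format, of m t] Fb[of s t] d1 unfolding c_def
        by (intro add_mono) auto
      also have "\<dots> = (c * r + B) * \<bar>t-s\<bar> powr \<theta>" using half[of t s] by (simp add: algebra_simps)
      also have "c * r + B = B * (1 - r^Suc k)/(1-r) + K * r^Suc k"
        unfolding c_def using r1 by (simp add: field_simps)
      finally show "\<bar>Z s t\<bar> \<le> (B * (1 - r^Suc k)/(1-r) + K * r^Suc k) * \<bar>t-s\<bar> powr \<theta>" .
    qed
  qed
  have lim: "(\<lambda>k. (B * (1 - r^k)/(1-r) + K * r^k) * \<bar>t-s\<bar> powr \<theta>) \<longlonglongrightarrow> (B * (1 - 0)/(1-r) + K * 0) * \<bar>t-s\<bar> powr \<theta>"
    using r0 r1 by (intro tendsto_intros LIMSEQ_power_zero) auto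
  have "\<bar>Z s t\<bar> \<le> (B * (1 - 0)/(1-r) + K * 0) * \<bar>t-s\<bar> powr \<theta>"
    by (rule tendsto_lowerbound[OF lim]) (use claim in auto)
  then show ?thesis unfolding r_def by simp
qed

lemma additive_zero:
  fixes Z :: "real \<Rightarrow> real \<Rightarrow> real" and K \<theta> :: real
  assumes th: "\<theta> > 1"
    and add: "\<And>s u t. Z s t = Z s u + Z u t"
    and Zb: "\<And>s t. s \<noteq> t \<Longrightarrow> \<bar>Z s t\<bar> \<le> K * \<bar>t-s\<bar> powr \<theta>"
  shows "Z s t = 0"
proof -
  have Zss: "Z s s = 0" for s using add[of s s s] by simp
  have Zb': "\<bar>Z s t\<bar> \<le> K * \<bar>t-s\<bar> powr \<theta>" for s t
    using Zb[of s t] Zss[of s] by (cases "s = t") auto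
  have "\<bar>Z s t\<bar> \<le> 0 / (1 - 2 powr (1-\<theta>)) * \<bar>t-s\<bar> powr \<theta>"
    by (rule dyadic_bound[where F="\<lambda>_ _. 0" and K=K]) (use th add Zb' in auto)
  then show ?thesis by simp
qed

definition cum :: "(int \<Rightarrow> real) \<Rightarrow> int \<Rightarrow> real" where
  "cum a k = (if 0 \<le> k then (\<Sum>i<nat k. a (int i)) else - (\<Sum>i<nat (-k). a (- int i - 1)))"

lemma cum_step: "cum a (k+1) = cum a k + a k"
proof (cases "0 \<le> k")
  case True
  then have "nat (k+1) = Suc (nat k)" by simp
  then show ?thesis using True by (simp add: cum_def)
next
  case False
  show ?thesis
  proof (cases "k = -1")
    case True then show ?thesis by (simp add: cum_def)
  next
    case F2: False
    with False have "nat (-k) = Suc (nat (-(k+1)))" by simp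
    moreover have "- int (nat (-(k+1))) - 1 = k" using False F2 by simp
    ultimately show ?thesis using False F2 by (simp add: cum_def)
  qed
qed

lemma cum0: "cum a 0 = 0" by (simp add: cum_def)

lemma step_bound_nat:
  fixes f :: "int \<Rightarrow> real"
  assumes "\<And>k. \<bar>f (k+1) - f k\<bar> \<le> M"
  shows "\<bar>f (k + int n) - f k\<bar> \<le> real n * M"
proof (induction n)
  case 0 then show ?case by simp
next
  case (Suc n)
  have e: "k + int (Suc n) = (k + int n) + 1" by simp
  have "\<bar>f (k + int (Suc n)) - f k\<bar> \<le> \<bar>f (k + int n + 1) - f (k + int n)\<bar> + \<bar>f (k + int n) - f k\<bar>"
    unfolding e by linarith
  also have "\<dots> \<le> M + real n * M" using assms[of "k + int n"] Suc.IH by linarith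
  finally show ?case by (simp add: algebra_simps)
qed

lemma step_bound:
  fixes f :: "int \<Rightarrow> real"
  assumes "\<And>k. \<bar>f (k+1) - f k\<bar> \<le> M"
  shows "\<bar>f k2 - f k1\<bar> \<le> \<bar>real_of_int (k2 - k1)\<bar> * M"
proof (cases "k1 \<le> k2")
  case True
  have "\<bar>f (k1 + int (nat (k2-k1))) - f k1\<bar> \<le> real (nat (k2-k1)) * M" by (rule step_bound_nat[of f M]) (rule assms)
  then show ?thesis using True by simp
next
  case False
  have "\<bar>f (k2 + int (nat (k1-k2))) - f k2\<bar> \<le> real (nat (k1-k2)) * M" by (rule step_bound_nat[of f M]) (rule assms)
  then show ?thesis using False by (simp add: abs_minus_commute)
qed

definition gridg :: "(real \<Rightarrow> real \<Rightarrow> real) \<Rightarrow> real \<Rightarrow> real \<Rightarrow> real" where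
  "gridg A c t = cum (\<lambda>i. A (of_int i * c) (of_int (i+1) * c)) \<lfloor>t/c\<rfloor> + A (of_int \<lfloor>t/c\<rfloor> * c) t"

definition Sg :: "(real \<Rightarrow> real \<Rightarrow> real) \<Rightarrow> real \<Rightarrow> real \<Rightarrow> real \<Rightarrow> real" where
  "Sg A c s t = gridg A c t - gridg A c s"

context
  fixes A :: "real \<Rightarrow> real \<Rightarrow> real" and C \<theta> :: real
  assumes th: "\<theta> > 1" and C0: "C \<ge> 0"
    and dA: "\<And>a b c. a \<le> b \<Longrightarrow> b \<le> c \<Longrightarrow> \<bar>A a c - A a b - A b c\<bar> \<le> C * (c-a) powr \<theta>"
begin

lemma dA_le: "a \<le> b \<Longrightarrow> b \<le> c \<Longrightarrow> c - a \<le> L \<Longrightarrow> \<bar>A a c - A a b - A b c\<bar> \<le> C * L powr \<theta>"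
  using dA[of a b c] th C0
  by (smt (verit, ccfv_SIG) mult_left_mono powr_mono2)

definition Phi :: "real \<Rightarrow> int \<Rightarrow> real" where
  "Phi c k = cum (\<lambda>i. A (of_int i * (c/2)) (of_int (i+1) * (c/2))) (2*k) - cum (\<lambda>i. A (of_int i * c) (of_int (i+1) * c)) k"

lemma Phi_step: assumes c: "c > 0" shows "\<bar>Phi c (k+1) - Phi c k\<bar> \<le> C * c powr \<theta>"
proof -
  have e: "2*(k+1) = (2*k+1) + 1" by simp
  have "Phi c (k+1) - Phi c k = A (of_int (2*k) * (c/2)) (of_int (2*k+1) * (c/2)) + A (of_int (2*k+1) * (c/2)) (of_int (2*k+1+1) * (c/2)) - A (of_int k * c) (of_int (k+1) * c)"
    unfolding Phi_def e cum_step by simp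
  also have "\<dots> = - (A (of_int k * c) (of_int (k+1) * c) - A (of_int k * c) (of_int k * c + c/2) - A (of_int k * c + c/2) (of_int (k+1) * c))"
    by (simp add: algebra_simps)
  finally have eq: "Phi c (k+1) - Phi c k = - (A (of_int k * c) (of_int (k+1) * c) - A (of_int k * c) (of_int k * c + c/2) - A (of_int k * c + c/2) (of_int (k+1) * c))" .
  show ?thesis unfolding eq abs_minus_cancel
    by (rule dA_le) (use c in \<open>auto simp: algebra_simps\<close>)
qed

lemma floor_facts: assumes c: "c > 0" shows "of_int \<lfloor>t/c\<rfloor> * c \<le> t" "t < of_int \<lfloor>t/c\<rfloor> * c + c"
proof -
  have "of_int \<lfloor>t/c\<rfloor> \<le> t/c" by (rule of_int_floor_le)
  from mult_right_mono[OF this, of c] show "of_int \<lfloor>t/c\<rfloor> * c \<le> t" using c by simp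
  have "t/c < of_int \<lfloor>t/c\<rfloor> + 1" using floor_correct[of "t/c"] by simp
  then show "t < of_int \<lfloor>t/c\<rfloor> * c + c" using c by (simp add: pos_divide_less_eq algebra_simps)
qed

lemma refine_t: assumes c: "c > 0"
  shows "\<bar>gridg A (c/2) t - gridg A c t - Phi c \<lfloor>t/c\<rfloor>\<bar> \<le> C * c powr \<theta>"
proof -
  define k where "k = \<lfloor>t/c\<rfloor>"
  define k' where "k' = \<lfloor>t/(c/2)\<rfloor>"
  have c2: "c/2 > 0" using c by simp
  note f1 = floor_facts[OF c, of t, folded k_def]
  note f2 = floor_facts[OF c2, of t, folded k'_def]
  have "of_int (2*k) * (c/2) \<le> t" using f1 by simp
  then have "2*k \<le> k'" unfolding k'_def using c2 by (simp add: le_floor_iff pos_le_divide_eq)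
  moreover have "k' < 2*k + 2"
  proof -
    have "of_int k' * (c/2) < of_int (2*k+2) * (c/2)" using f1 f2 by (simp add: algebra_simps)
    then have "of_int k' < (of_int (2*k+2)::real)" by (rule mult_right_less_imp_less) (use c in simp)
    then show ?thesis by linarith
  qed
  ultimately have kk: "k' = 2*k \<or> k' = 2*k+1" by linarith
  define a where "a = (\<lambda>i. A (of_int i * c) (of_int (i+1) * c))"
  define a' where "a' = (\<lambda>i. A (of_int i * (c/2)) (of_int (i+1) * (c/2)))"
  have g: "gridg A (c/2) t - gridg A c t - Phi c k = cum a' k' + A (of_int k' * (c/2)) t - cum a' (2*k) - A (of_int k * c) t"
    unfolding gridg_def Phi_def k_def k'_def a_def a'_def by simp
  from kk show ?thesis
  proof
    assume "k' = 2*k"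
    then show ?thesis unfolding k_def[symmetric] g using c C0 by simp
  next
    assume e: "k' = 2*k+1"
    have "gridg A (c/2) t - gridg A c t - Phi c k = - (A (of_int k * c) t - A (of_int k * c) (of_int k * c + c/2) - A (of_int k * c + c/2) t)"
      unfolding g e cum_step a'_def by (simp add: algebra_simps)
    moreover have "\<bar>A (of_int k * c) t - A (of_int k * c) (of_int k * c + c/2) - A (of_int k * c + c/2) t\<bar> \<le> C * c powr \<theta>"
      by (rule dA_le) (use f1 f2 e c in \<open>auto simp: algebra_simps\<close>)
    ultimately show ?thesis unfolding k_def[symmetric] by simp
  qed
qed

lemma floor_diff_bound: assumes c: "c > 0"
  shows "\<bar>real_of_int (\<lfloor>t/c\<rfloor> - \<lfloor>s/c\<rfloor>)\<bar> \<le> \<bar>t-s\<bar>/c + 1"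
proof -
  note a = floor_facts[OF c, of t] floor_facts[OF c, of s]
  have "\<bar>(of_int \<lfloor>t/c\<rfloor> - of_int \<lfloor>s/c\<rfloor>) * c\<bar> \<le> \<bar>t-s\<bar> + c" using a by (auto simp: algebra_simps abs_if)
  then have "\<bar>real_of_int (\<lfloor>t/c\<rfloor> - \<lfloor>s/c\<rfloor>)\<bar> * c \<le> \<bar>t-s\<bar> + c" using c by (simp add: abs_mult)
  then show ?thesis using c by (simp add: field_simps)
qed

lemma Sg_refine: assumes c: "c > 0"
  shows "\<bar>Sg A (c/2) s t - Sg A c s t\<bar> \<le> (\<bar>t-s\<bar>/c + 3) * (C * c powr \<theta>)"
proof -
  have p: "\<bar>Phi c \<lfloor>t/c\<rfloor> - Phi c \<lfloor>s/c\<rfloor>\<bar> \<le> \<bar>real_of_int (\<lfloor>t/c\<rfloor> - \<lfloor>s/c\<rfloor>)\<bar> * (C * c powr \<theta>)"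
    by (rule step_bound) (rule Phi_step[OF c])
  have "\<bar>real_of_int (\<lfloor>t/c\<rfloor> - \<lfloor>s/c\<rfloor>)\<bar> * (C * c powr \<theta>) \<le> (\<bar>t-s\<bar>/c + 1) * (C * c powr \<theta>)"
    by (rule mult_right_mono[OF floor_diff_bound[OF c]]) (use C0 in simp)
  then show ?thesis using p refine_t[OF c, of t] refine_t[OF c, of s] unfolding Sg_def
    by (simp add: algebra_simps abs_if split: if_splits; linarith)
qed

lemma Sg_add: "Sg A c s t = Sg A c s u + Sg A c u t"
  unfolding Sg_def by simp

lemma Sg_init: assumes c: "c > 0" and st: "s \<le> t" "t - s \<le> c"
  shows "\<bar>Sg A c s t - A s t\<bar> \<le> 2 * (C * c powr \<theta>)"
proof -
  define k where "k = \<lfloor>s/c\<rfloor>"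
  define k' where "k' = \<lfloor>t/c\<rfloor>"
  note f1 = floor_facts[OF c, of s, folded k_def]
  note f2 = floor_facts[OF c, of t, folded k'_def]
  have "k \<le> k'" unfolding k_def k'_def using st c by (intro floor_mono divide_right_mono) auto
  moreover have "k' < k + 2"
  proof -
    have "of_int k' * c < of_int (k+2) * c" using f1 f2 st by (simp add: algebra_simps)
    then have "of_int k' < (of_int (k+2)::real)" by (rule mult_right_less_imp_less) (use c in simp)
    then show ?thesis by linarith
  qed
  ultimately have kk: "k' = k \<or> k' = k+1" by linarith
  define a where "a = (\<lambda>i. A (of_int i * c) (of_int (i+1) * c))"
  have g: "Sg A c s t = cum a k' + A (of_int k' * c) t - cum a k - A (of_int k * c) s"
    unfolding Sg_def gridg_def k_def k'_def a_def by simp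
  from kk show ?thesis
  proof
    assume e: "k' = k"
    have "Sg A c s t - A s t = A (of_int k * c) t - A (of_int k * c) s - A s t" unfolding g e by simp
    moreover have "\<bar>A (of_int k * c) t - A (of_int k * c) s - A s t\<bar> \<le> C * c powr \<theta>"
      by (rule dA_le) (use f1 f2 e st in auto)
    ultimately show ?thesis using C0 c by simp
  next
    assume e: "k' = k+1"
    have "Sg A c s t - A s t = (A (of_int k * c) (of_int (k+1) * c) - A (of_int k * c) s - A s (of_int (k+1) * c))
        - (A s t - A s (of_int (k+1) * c) - A (of_int (k+1) * c) t)"
      unfolding g e cum_step a_def by simp
    moreover have "\<bar>A (of_int k * c) (of_int (k+1) * c) - A (of_int k * c) s - A s (of_int (k+1) * c)\<bar> \<le> C * c powr \<theta>"
      by (rule dA_le) (use f1 f2 e st in \<open>auto simp: algebra_simps\<close>)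
    moreover have "\<bar>A s t - A s (of_int (k+1) * c) - A (of_int (k+1) * c) t\<bar> \<le> C * c powr \<theta>"
      by (rule dA_le) (use f1 f2 e st in \<open>auto simp: algebra_simps\<close>)
    ultimately show ?thesis by linarith
  qed
qed

lemma pow2_powr: "((2::real)^m) powr x = (2 powr x)^m"
proof -
  have "((2::real)^m) powr x = (2 powr real m) powr x" by (simp add: powr_realpow)
  also have "\<dots> = 2 powr (real m * x)" by (simp add: powr_powr)
  also have "\<dots> = (2 powr x)^m" by (simp add: powr_power)
  finally show ?thesis .
qed

lemma Sg_conv: assumes h: "h > 0"
  shows "convergent (\<lambda>m. Sg A (h/2^m) s t)"
    "\<bar>lim (\<lambda>m. Sg A (h/2^m) s t) - Sg A h s t\<bar>
       \<le> C * h powr \<theta> * (\<bar>t-s\<bar>/h) / (1 - 2 / 2 powr \<theta>) + 3 * C * h powr \<theta> / (1 - 1 / 2 powr \<theta>)"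
proof -
  define r where "r = 2 / (2::real) powr \<theta>"
  define q where "q = 1 / (2::real) powr \<theta>"
  have p2: "2 powr \<theta> > (2::real)" using powr_less_mono[OF th, of 2] by simp
  have r0: "0 < r" "r < 1" unfolding r_def using p2 by auto
  have q0: "0 < q" "q < 1" unfolding q_def using p2 by auto
  define f where "f = (\<lambda>m. Sg A (h/2^m) s t)"
  define d where "d = (\<lambda>m. f (Suc m) - f m)"
  define b where "b = (\<lambda>m. C * h powr \<theta> * (\<bar>t-s\<bar>/h) * r^m + 3 * C * h powr \<theta> * q^m)"
  have db: "\<bar>d m\<bar> \<le> b m" for m
  proof -
    have hm: "h/2^m > 0" using h by simp
    have e: "h / 2 ^ Suc m = (h/2^m)/2" by simp
    have "\<bar>d m\<bar> \<le> (\<bar>t-s\<bar>/(h/2^m) + 3) * (C * (h/2^m) powr \<theta>)"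
      unfolding d_def f_def e by (rule Sg_refine[OF hm])
    also have "\<dots> = b m"
    proof -
      have "(h/2^m) powr \<theta> = h powr \<theta> / (2^m) powr \<theta>" by (rule powr_divide)
      also have "\<dots> = h powr \<theta> / (2 powr \<theta>)^m" by (simp add: pow2_powr)
      also have "\<dots> = h powr \<theta> * q^m" unfolding q_def by (simp add: power_one_over)
      finally have "(h/2^m) powr \<theta> = h powr \<theta> * q^m" .
      moreover have "(2::real)^m * q^m = r^m" unfolding r_def q_def by (simp add: power_mult_distrib[symmetric])
      moreover have "\<bar>t-s\<bar>/(h/2^m) = (\<bar>t-s\<bar>/h) * 2^m" by simp
      ultimately show ?thesis unfolding b_def
        by (simp only:) (simp add: algebra_simps)
    qed
    finally show ?thesis .
  qed
  have sb: "summable b" unfolding b_def using r0 q0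
    by (intro summable_add summable_mult summable_geometric) auto
  have sd: "summable (\<lambda>m. \<bar>d m\<bar>)"
    by (rule summable_comparison_test[OF _ sb]) (use db in auto)
  have sd': "summable d" using sd by (rule summable_rabs_cancel)
  have tel: "(\<Sum>j<m. d j) = f m - f 0" for m unfolding d_def by (rule sum_lessThan_telescope)
  have "(\<lambda>m. f m - f 0) \<longlonglongrightarrow> suminf d" using summable_LIMSEQ[OF sd'] unfolding tel .
  from tendsto_add[OF this tendsto_const[of "f 0"]] have lf: "f \<longlonglongrightarrow> f 0 + suminf d"
    by (simp add: add.commute)
  then show "convergent (\<lambda>m. Sg A (h/2^m) s t)" unfolding f_def by (rule convergentI)
  have "lim f = f 0 + suminf d" using lf by (rule limI)
  moreover have "\<bar>suminf d\<bar> \<le> suminf b"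
    using summable_rabs[OF sd] suminf_le[OF db sd sb] by linarith
  moreover have "suminf b = C * h powr \<theta> * (\<bar>t-s\<bar>/h) / (1 - r) + 3 * C * h powr \<theta> / (1 - q)"
  proof -
    define K1 where "K1 = C * h powr \<theta> * (\<bar>t-s\<bar>/h)"
    define K2 where "K2 = 3 * C * h powr \<theta>"
    have bb: "b = (\<lambda>m. K1 * r^m + K2 * q^m)" unfolding b_def K1_def K2_def by simp
    have s1: "summable (\<lambda>m. K1 * r^m)" "summable (\<lambda>m. K2 * q^m)"
      using r0 q0 by (auto intro!: summable_mult summable_geometric)
    have "suminf b = (\<Sum>m. K1 * r^m) + (\<Sum>m. K2 * q^m)" unfolding bb by (rule suminf_add[OF s1, symmetric])
    also have "\<dots> = K1 * (\<Sum>m. r^m) + K2 * (\<Sum>m. q^m)"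
      using r0 q0 by (simp add: suminf_mult summable_geometric)
    finally have "suminf b = K1 * (\<Sum>m. r^m) + K2 * (\<Sum>m. q^m)" .
    then have "suminf b = C * h powr \<theta> * (\<bar>t-s\<bar>/h) * (\<Sum>m. r^m) + 3 * C * h powr \<theta> * (\<Sum>m. q^m)"
      unfolding K1_def K2_def .
    then show ?thesis using r0 q0 by (simp add: suminf_geometric)
  qed
  moreover have "f 0 = Sg A h s t" unfolding f_def by simp
  ultimately show "\<bar>lim (\<lambda>m. Sg A (h/2^m) s t) - Sg A h s t\<bar>
       \<le> C * h powr \<theta> * (\<bar>t-s\<bar>/h) / (1 - 2 / 2 powr \<theta>) + 3 * C * h powr \<theta> / (1 - 1 / 2 powr \<theta>)"
    unfolding f_def r_def q_def by simp
qed

definition Ih :: "real \<Rightarrow> real \<Rightarrow> real \<Rightarrow> real" where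
  "Ih h s t = lim (\<lambda>m. Sg A (h/2^m) s t)"

lemma Ih_lim: "h > 0 \<Longrightarrow> (\<lambda>m. Sg A (h/2^m) s t) \<longlonglongrightarrow> Ih h s t"
  unfolding Ih_def using Sg_conv(1) convergent_LIMSEQ_iff by blast

lemma Ih_add: assumes h: "h > 0" shows "Ih h s t = Ih h s u + Ih h u t"
proof -
  have "(\<lambda>m. Sg A (h/2^m) s u + Sg A (h/2^m) u t) \<longlonglongrightarrow> Ih h s u + Ih h u t"
    by (intro tendsto_add Ih_lim h)
  then have "(\<lambda>m. Sg A (h/2^m) s t) \<longlonglongrightarrow> Ih h s u + Ih h u t" by (simp add: Sg_add[symmetric])
  then show ?thesis using Ih_lim[OF h, of s t] LIMSEQ_unique by blast
qed

lemma Ih_double: assumes h: "h > 0" shows "Ih (2*h) s t = Ih h s t"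
proof -
  have "(\<lambda>m. Sg A (2*h/2^(Suc m)) s t) \<longlonglongrightarrow> Ih h s t" using Ih_lim[OF h, of s t] by simp
  then have "(\<lambda>m. Sg A (2*h/2^m) s t) \<longlonglongrightarrow> Ih h s t" by (rule LIMSEQ_imp_Suc)
  moreover have "(\<lambda>m. Sg A (2*h/2^m) s t) \<longlonglongrightarrow> Ih (2*h) s t" using h by (intro Ih_lim) simp
  ultimately show ?thesis using LIMSEQ_unique by blast
qed

lemma Ih_pow: assumes h: "h > 0" shows "Ih (2^n * h) s t = Ih h s t"
proof (induction n)
  case 0 then show ?case by simp
next
  case (Suc n)
  have "Ih (2^Suc n * h) s t = Ih (2 * (2^n * h)) s t" by (simp add: mult.assoc)
  also have "\<dots> = Ih (2^n * h) s t" by (rule Ih_double) (use h in simp)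
  finally show ?case using Suc.IH by simp
qed

lemma Ih_scale: assumes L: "L > 0" shows "\<exists>h. L \<le> h \<and> h \<le> 2*L \<and> (\<forall>s t. Ih h s t = Ih 1 s t)"
proof -
  define j where "j = \<lceil>log 2 L\<rceil>"
  define h where "h = (2::real) powr (of_int j)"
  have "L = 2 powr (log 2 L)" using L by simp
  also have "\<dots> \<le> h" unfolding h_def j_def by (intro powr_mono) auto
  finally have h1: "L \<le> h" .
  have "h \<le> 2 powr (log 2 L + 1)" unfolding h_def j_def by (intro powr_mono) linarith+
  also have "\<dots> = 2 * L" using L by (simp add: powr_add)
  finally have h2: "h \<le> 2*L" .
  have h3: "Ih h s t = Ih 1 s t" for s t
  proof (cases "0 \<le> j")
    case True
    have "h = 2^(nat j) * 1" unfolding h_def using True by (simp add: powr_realpow[symmetric])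
    then show ?thesis using Ih_pow[of 1 "nat j" s t] by simp
  next
    case False
    have "2^(nat (-j)) * h = 2 powr (real (nat (-j))) * 2 powr (of_int j)" unfolding h_def by (simp add: powr_realpow)
    also have "\<dots> = 1" using False by (simp add: powr_add[symmetric])
    finally have e: "1 = 2^(nat (-j)) * h" by simp
    have "h > 0" unfolding h_def by simp
    then show ?thesis using Ih_pow[of h "nat (-j)" s t] e by simp
  qed
  show ?thesis using h1 h2 h3 by blast
qed

lemma Ih_bound: assumes st: "s < t"
  shows "\<bar>A s t - Ih 1 s t\<bar> \<le> C * 2 powr \<theta> * (1 / (1 - 2 / 2 powr \<theta>) + 3 / (1 - 1 / 2 powr \<theta>) + 2) * (t-s) powr \<theta>"
proof -
  define L where "L = t - s"
  have L: "L > 0" using st unfolding L_def by simp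
  obtain h where h: "L \<le> h" "h \<le> 2*L" "\<And>s t. Ih h s t = Ih 1 s t" using Ih_scale[OF L] by blast
  have h0: "h > 0" using h L by simp
  have p2: "2 powr \<theta> > (2::real)" using powr_less_mono[OF th, of 2] by simp
  define r where "r = 2 / (2::real) powr \<theta>"
  define q where "q = 1 / (2::real) powr \<theta>"
  have r0: "0 < 1 - r" "0 < 1 - q" unfolding r_def q_def using p2 by auto
  have a1: "\<bar>Ih h s t - Sg A h s t\<bar> \<le> C * h powr \<theta> * (\<bar>t-s\<bar>/h) / (1 - r) + 3 * C * h powr \<theta> / (1 - q)"
    using Sg_conv(2)[OF h0, of s t] unfolding Ih_def r_def q_def .
  have a2: "\<bar>Sg A h s t - A s t\<bar> \<le> 2 * (C * h powr \<theta>)" using Sg_init[OF h0, of s t] st h unfolding L_def by simp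
  have Ch: "0 \<le> C * h powr \<theta>" using C0 by simp
  have "\<bar>t-s\<bar>/h \<le> 1" using h st h0 unfolding L_def by simp
  then have "C * h powr \<theta> * (\<bar>t-s\<bar>/h) / (1 - r) \<le> C * h powr \<theta> * 1 / (1 - r)"
    using Ch r0 by (intro divide_right_mono mult_left_mono) auto
  with a1 a2 have "\<bar>A s t - Ih 1 s t\<bar> \<le> (C * h powr \<theta>) * (1 / (1 - r) + 3 / (1 - q) + 2)"
    unfolding h(3)[symmetric] by (simp add: field_simps)
  also have "\<dots> \<le> (C * (2 powr \<theta> * L powr \<theta>)) * (1 / (1 - r) + 3 / (1 - q) + 2)"
  proof (intro mult_right_mono mult_left_mono)
    have "h powr \<theta> \<le> (2*L) powr \<theta>" using h h0 th by (intro powr_mono2) auto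
    then show "h powr \<theta> \<le> 2 powr \<theta> * L powr \<theta>" using L by (simp add: powr_mult)
    show "0 \<le> 1 / (1 - r) + 3 / (1 - q) + 2" using r0 by simp
  qed (use C0 in auto)
  finally show ?thesis unfolding L_def r_def q_def by (simp add: algebra_simps)
qed

lemma sewing_ctx: "\<exists>I. (\<forall>s u t. I s t = I s u + I u t) \<and> (\<exists>K. \<forall>s t. s < t \<longrightarrow> \<bar>A s t - I s t\<bar> \<le> K * (t-s) powr \<theta>)"
  using Ih_add[of 1] Ih_bound by (intro exI[of _ "Ih 1"] conjI) auto

end

lemma sewing:
  fixes A :: "real \<Rightarrow> real \<Rightarrow> real" and C \<theta> :: real
  assumes "\<theta> > 1" "C \<ge> 0"
    and "\<And>a b c. a \<le> b \<Longrightarrow> b \<le> c \<Longrightarrow> \<bar>A a c - A a b - A b c\<bar> \<le> C * (c-a) powr \<theta>"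
  shows "\<exists>I. (\<forall>s u t. I s t = I s u + I u t) \<and> (\<exists>K. \<forall>s t. s < t \<longrightarrow> \<bar>A s t - I s t\<bar> \<le> K * (t-s) powr \<theta>)"
  by (rule sewing_ctx[OF assms])

lemma sum_supp_eq:
  assumes "finite S" "finite T" "\<And>x. x \<in> S \<Longrightarrow> x \<notin> T \<Longrightarrow> f x = 0" "\<And>x. x \<in> T \<Longrightarrow> x \<notin> S \<Longrightarrow> f x = 0"
  shows "sum f S = sum f T"
proof -
  have "sum f S = sum f (S \<union> T)" by (rule sum.mono_neutral_left) (use assms in auto)
  also have "sum f T = sum f (S \<union> T)" by (rule sum.mono_neutral_left) (use assms in auto)
  ultimately show ?thesis by simp
qed

lemma swap4:
  fixes X :: "'a \<Rightarrow> 'a \<Rightarrow> 'a \<Rightarrow> 'a \<Rightarrow> real"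
  shows "(\<Sum>d\<in>B. \<Sum>c\<in>B. \<Sum>a\<in>B. \<Sum>b\<in>B. X d c a b) = (\<Sum>a\<in>B. \<Sum>b\<in>B. \<Sum>c\<in>B. \<Sum>d\<in>B. X d c a b)"
proof -
  have "(\<Sum>d\<in>B. \<Sum>c\<in>B. \<Sum>a\<in>B. \<Sum>b\<in>B. X d c a b) = (\<Sum>d\<in>B. \<Sum>a\<in>B. \<Sum>c\<in>B. \<Sum>b\<in>B. X d c a b)"
    by (rule sum.cong[OF refl], rule sum.swap)
  also have "\<dots> = (\<Sum>d\<in>B. \<Sum>a\<in>B. \<Sum>b\<in>B. \<Sum>c\<in>B. X d c a b)"
    by (rule sum.cong[OF refl], rule sum.cong[OF refl], rule sum.swap)
  also have "\<dots> = (\<Sum>a\<in>B. \<Sum>d\<in>B. \<Sum>b\<in>B. \<Sum>c\<in>B. X d c a b)"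
    by (rule sum.swap)
  also have "\<dots> = (\<Sum>a\<in>B. \<Sum>b\<in>B. \<Sum>d\<in>B. \<Sum>c\<in>B. X d c a b)"
    by (rule sum.cong[OF refl], rule sum.swap)
  also have "\<dots> = (\<Sum>a\<in>B. \<Sum>b\<in>B. \<Sum>c\<in>B. \<Sum>d\<in>B. X d c a b)"
    by (rule sum.cong[OF refl], rule sum.cong[OF refl], rule sum.swap)
  finally show ?thesis .
qed

lemma pull4:
  fixes f :: "'x \<Rightarrow> 'a \<Rightarrow> 'a \<Rightarrow> 'a \<Rightarrow> 'a \<Rightarrow> real"
  shows "(\<Sum>x\<in>X. \<Sum>a1\<in>A. \<Sum>a2\<in>A. \<Sum>b1\<in>B. \<Sum>b2\<in>B. f x a1 a2 b1 b2)
       = (\<Sum>a1\<in>A. \<Sum>a2\<in>A. \<Sum>b1\<in>B. \<Sum>b2\<in>B. \<Sum>x\<in>X. f x a1 a2 b1 b2)"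
proof -
  have "(\<Sum>x\<in>X. \<Sum>a1\<in>A. \<Sum>a2\<in>A. \<Sum>b1\<in>B. \<Sum>b2\<in>B. f x a1 a2 b1 b2)
      = (\<Sum>a1\<in>A. \<Sum>x\<in>X. \<Sum>a2\<in>A. \<Sum>b1\<in>B. \<Sum>b2\<in>B. f x a1 a2 b1 b2)" by (rule sum.swap)
  also have "\<dots> = (\<Sum>a1\<in>A. \<Sum>a2\<in>A. \<Sum>x\<in>X. \<Sum>b1\<in>B. \<Sum>b2\<in>B. f x a1 a2 b1 b2)"
    by (rule sum.cong[OF refl], rule sum.swap)
  also have "\<dots> = (\<Sum>a1\<in>A. \<Sum>a2\<in>A. \<Sum>b1\<in>B. \<Sum>x\<in>X. \<Sum>b2\<in>B. f x a1 a2 b1 b2)"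
    by (rule sum.cong[OF refl], rule sum.cong[OF refl], rule sum.swap)
  also have "\<dots> = (\<Sum>a1\<in>A. \<Sum>a2\<in>A. \<Sum>b1\<in>B. \<Sum>b2\<in>B. \<Sum>x\<in>X. f x a1 a2 b1 b2)"
    by (rule sum.cong[OF refl], rule sum.cong[OF refl], rule sum.cong[OF refl], rule sum.swap)
  finally show ?thesis .
qed

lemma sum_ind4:
  assumes "finite A" "finite B" "p1 \<in> A" "p2 \<in> A" "q1 \<in> B" "q2 \<in> B"
  shows "(\<Sum>a1\<in>A. \<Sum>a2\<in>A. \<Sum>b1\<in>B. \<Sum>b2\<in>B.
      (if a1 = p1 \<and> a2 = p2 \<and> b1 = q1 \<and> b2 = q2 then v else (0::real))) = v"
proof -
  have "(\<Sum>a1\<in>A. \<Sum>a2\<in>A. \<Sum>b1\<in>B. \<Sum>b2\<in>B.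
      (if a1 = p1 \<and> a2 = p2 \<and> b1 = q1 \<and> b2 = q2 then v else (0::real)))
    = (\<Sum>a1\<in>A. \<Sum>a2\<in>A. \<Sum>b1\<in>B. (if a1 = p1 \<and> a2 = p2 \<and> b1 = q1 then v else 0))"
    using assms by (intro sum.cong refl) (auto simp: sum.delta)
  also have "\<dots> = (\<Sum>a1\<in>A. \<Sum>a2\<in>A. (if a1 = p1 \<and> a2 = p2 then v else 0))"
    using assms by (intro sum.cong refl) (auto simp: sum.delta)
  also have "\<dots> = (\<Sum>a1\<in>A. (if a1 = p1 then v else 0))"
    using assms by (intro sum.cong refl) (auto simp: sum.delta)
  also have "\<dots> = v" using assms by (simp add: sum.delta)
  finally show ?thesis .
qed

locale CH =
  fixes one :: 'b and deg :: "'b \<Rightarrow> nat" and mult comult :: "'b \<Rightarrow> 'b \<Rightarrow> 'b \<Rightarrow> nat"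
  assumes H: "comb_hopf one deg mult comult"
begin

lemmas Hc = H[unfolded comb_hopf_def]
lemma finBn: "finite (Bn deg n)" using Hc[THEN conjunct1] by blast
lemma Bn0: "Bn deg 0 = {one}" using Hc[THEN conjunct2, THEN conjunct2, THEN conjunct1] .
lemmas H4 = Hc[THEN conjunct2, THEN conjunct2, THEN conjunct2]
lemma deg_one[simp]: "deg one = 0" using Bn0 unfolding Bn_def by blast
lemma deg0_iff: "deg a = 0 \<longleftrightarrow> a = one"
proof -
  have "a \<in> {x. deg x = 0} \<longleftrightarrow> a \<in> {one}" using Bn0[unfolded Bn_def] by simp
  then show ?thesis by simp
qed
lemma mult_deg: "mult a b c \<noteq> 0 \<Longrightarrow> deg c = deg a + deg b" using H4[THEN conjunct1] by blast
lemma comult_deg: "comult a b c \<noteq> 0 \<Longrightarrow> deg a + deg b = deg c" using H4[THEN conjunct2, THEN conjunct1] by blast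
lemmas H6 = H4[THEN conjunct2, THEN conjunct2]
lemma mult_one1: "mult one a c = (if c = a then 1 else 0)" using H6[THEN conjunct1] by blast
lemma mult_one2: "mult a one c = (if c = a then 1 else 0)" using H6[THEN conjunct1] by blast
lemma comult_one1: "comult one a c = (if a = c then 1 else 0)" using H6[THEN conjunct2, THEN conjunct1] by blast
lemma comult_one2: "comult a one c = (if a = c then 1 else 0)" using H6[THEN conjunct2, THEN conjunct1] by blast
lemmas H8 = H6[THEN conjunct2, THEN conjunct2, THEN conjunct2]
lemma coassoc_ax: "(\<Sum>d\<in>Bn deg (deg x + deg y). comult x y d * comult d z e)
                = (\<Sum>d\<in>Bn deg (deg y + deg z). comult y z d * comult x d e)"
  using H8[THEN conjunct1] by blast
lemma compat_ax: "(\<Sum>c\<in>Bn deg (deg a + deg b). mult a b c * comult x y c)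
                = (\<Sum>a1\<in>Ble deg (deg a). \<Sum>a2\<in>Ble deg (deg a).
                   \<Sum>b1\<in>Ble deg (deg b). \<Sum>b2\<in>Ble deg (deg b).
                     comult a1 a2 a * comult b1 b2 b * mult a1 b1 x * mult a2 b2 y)"
  using H8[THEN conjunct2] by blast

lemma Ble_eq: "Ble deg n = (\<Union>k\<in>{..n}. Bn deg k)" unfolding Ble_def Bn_def by auto
lemma finBle: "finite (Ble deg n)" unfolding Ble_eq using finBn by auto
lemma Ble_iff[simp]: "a \<in> Ble deg n \<longleftrightarrow> deg a \<le> n" unfolding Ble_def by simp
lemma Bn_iff[simp]: "a \<in> Bn deg n \<longleftrightarrow> deg a = n" unfolding Bn_def by simp
lemma finMid: "finite {a. 0 < deg a \<and> deg a < d}"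
  by (rule finite_subset[OF _ finBle[of d]]) auto

definition conv :: "('b \<Rightarrow> real) \<Rightarrow> ('b \<Rightarrow> real) \<Rightarrow> 'b \<Rightarrow> real" where
  "conv f g \<sigma> = (\<Sum>a\<in>Ble deg (deg \<sigma>). \<Sum>b\<in>Ble deg (deg \<sigma>). real (comult a b \<sigma>) * f a * g b)"

definition Mu :: "('b \<Rightarrow> real) \<Rightarrow> 'b \<Rightarrow> 'b \<Rightarrow> real" where
  "Mu p a b = (\<Sum>c\<in>Bn deg (deg a + deg b). real (mult a b c) * p c)"

definition eps :: "'b \<Rightarrow> real" where "eps \<sigma> = (if \<sigma> = one then 1 else 0)"

lemma conv_big: assumes "deg \<sigma> \<le> M"
  shows "conv f g \<sigma> = (\<Sum>a\<in>Ble deg M. \<Sum>b\<in>Ble deg M. real (comult a b \<sigma>) * f a * g b)"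
proof -
  have inner: "(\<Sum>b\<in>Ble deg (deg \<sigma>). real (comult a b \<sigma>) * f a * g b) = (\<Sum>b\<in>Ble deg M. real (comult a b \<sigma>) * f a * g b)" for a
    by (rule sum_supp_eq[OF finBle finBle]) (use assms comult_deg in fastforce)+
  have "conv f g \<sigma> = (\<Sum>a\<in>Ble deg (deg \<sigma>). \<Sum>b\<in>Ble deg M. real (comult a b \<sigma>) * f a * g b)"
    unfolding conv_def inner ..
  also have "\<dots> = (\<Sum>a\<in>Ble deg M. \<Sum>b\<in>Ble deg M. real (comult a b \<sigma>) * f a * g b)"
  proof (rule sum_supp_eq[OF finBle finBle])
    fix a assume "a \<in> Ble deg M" "a \<notin> Ble deg (deg \<sigma>)"
    then have "comult a b \<sigma> = 0" for b using comult_deg by fastforce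
    then show "(\<Sum>b\<in>Ble deg M. real (comult a b \<sigma>) * f a * g b) = 0" by simp
  qed (use assms in auto)
  finally show ?thesis .
qed

lemma coassoc_Ble: assumes "deg e \<le> n"
  shows "(\<Sum>d\<in>Ble deg n. real (comult x y d) * real (comult d z e)) = (\<Sum>d\<in>Ble deg n. real (comult y z d) * real (comult x d e))"
proof -
  have "(\<Sum>d\<in>Ble deg n. real (comult x y d) * real (comult d z e)) = (\<Sum>d\<in>Bn deg (deg x + deg y). real (comult x y d) * real (comult d z e))"
  proof (rule sum_supp_eq[OF finBle finBn])
    fix d assume "d \<in> Bn deg (deg x + deg y)" "d \<notin> Ble deg n"
    then have "comult d z e = 0" using comult_deg assms by fastforce
    then show "real (comult x y d) * real (comult d z e) = 0" by simp
  qed (use comult_deg in fastforce)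
  also have "\<dots> = real (\<Sum>d\<in>Bn deg (deg x + deg y). comult x y d * comult d z e)" by simp
  also have "\<dots> = real (\<Sum>d\<in>Bn deg (deg y + deg z). comult y z d * comult x d e)" by (simp only: coassoc_ax)
  also have "\<dots> = (\<Sum>d\<in>Bn deg (deg y + deg z). real (comult y z d) * real (comult x d e))" by simp
  also have "\<dots> = (\<Sum>d\<in>Ble deg n. real (comult y z d) * real (comult x d e))"
  proof (rule sum_supp_eq[OF finBn finBle])
    fix d assume "d \<in> Bn deg (deg y + deg z)" "d \<notin> Ble deg n"
    then have "comult x d e = 0" using comult_deg assms by fastforce
    then show "real (comult y z d) * real (comult x d e) = 0" by simp
  qed (use comult_deg in fastforce)
  finally show ?thesis .
qed

lemma conv_assoc: "conv (conv f g) h \<sigma> = conv f (conv g h) \<sigma>"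
proof -
  define B where "B = Ble deg (deg \<sigma>)"
  have cb: "d \<in> B \<Longrightarrow> conv f g d = (\<Sum>a\<in>B. \<Sum>b\<in>B. real (comult a b d) * f a * g b)" for d f g
    unfolding B_def by (rule conv_big) simp
  have "conv (conv f g) h \<sigma> = (\<Sum>d\<in>B. \<Sum>c\<in>B. real (comult d c \<sigma>) * conv f g d * h c)"
    unfolding conv_def B_def ..
  also have "\<dots> = (\<Sum>d\<in>B. \<Sum>c\<in>B. \<Sum>a\<in>B. \<Sum>b\<in>B. (real (comult a b d) * real (comult d c \<sigma>)) * (f a * g b * h c))"
    by (intro sum.cong refl) (simp add: cb sum_distrib_left sum_distrib_right algebra_simps)
  also have "\<dots> = (\<Sum>a\<in>B. \<Sum>b\<in>B. \<Sum>c\<in>B. \<Sum>d\<in>B. (real (comult a b d) * real (comult d c \<sigma>)) * (f a * g b * h c))"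
    by (rule swap4)
  also have "\<dots> = (\<Sum>a\<in>B. \<Sum>b\<in>B. \<Sum>c\<in>B. (\<Sum>d\<in>B. real (comult a b d) * real (comult d c \<sigma>)) * (f a * g b * h c))"
    by (simp add: sum_distrib_right)
  also have "\<dots> = (\<Sum>a\<in>B. \<Sum>b\<in>B. \<Sum>c\<in>B. (\<Sum>d\<in>B. real (comult b c d) * real (comult a d \<sigma>)) * (f a * g b * h c))"
    unfolding B_def by (simp only: coassoc_Ble[OF order_refl])
  also have "\<dots> = (\<Sum>a\<in>B. \<Sum>b\<in>B. \<Sum>c\<in>B. \<Sum>d\<in>B. (real (comult b c d) * real (comult a d \<sigma>)) * (f a * g b * h c))"
    by (simp add: sum_distrib_right)
  also have "\<dots> = (\<Sum>a\<in>B. \<Sum>d\<in>B. \<Sum>b\<in>B. \<Sum>c\<in>B. (real (comult b c d) * real (comult a d \<sigma>)) * (f a * g b * h c))"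
  proof (rule sum.cong[OF refl])
    fix a
    have "(\<Sum>b\<in>B. \<Sum>c\<in>B. \<Sum>d\<in>B. (real (comult b c d) * real (comult a d \<sigma>)) * (f a * g b * h c))
      = (\<Sum>b\<in>B. \<Sum>d\<in>B. \<Sum>c\<in>B. (real (comult b c d) * real (comult a d \<sigma>)) * (f a * g b * h c))"
      by (rule sum.cong[OF refl], rule sum.swap)
    also have "\<dots> = (\<Sum>d\<in>B. \<Sum>b\<in>B. \<Sum>c\<in>B. (real (comult b c d) * real (comult a d \<sigma>)) * (f a * g b * h c))"
      by (rule sum.swap)
    finally show "(\<Sum>b\<in>B. \<Sum>c\<in>B. \<Sum>d\<in>B. (real (comult b c d) * real (comult a d \<sigma>)) * (f a * g b * h c))
      = (\<Sum>d\<in>B. \<Sum>b\<in>B. \<Sum>c\<in>B. (real (comult b c d) * real (comult a d \<sigma>)) * (f a * g b * h c))" .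
  qed
  also have "\<dots> = (\<Sum>a\<in>B. \<Sum>d\<in>B. real (comult a d \<sigma>) * f a * conv g h d)"
    by (intro sum.cong refl) (simp add: cb sum_distrib_left sum_distrib_right algebra_simps)
  also have "\<dots> = conv f (conv g h) \<sigma>" unfolding conv_def B_def ..
  finally show ?thesis .
qed

lemma conv_one: "conv f g one = f one * g one"
proof -
  have "Ble deg 0 = {one}" using Bn0 unfolding Ble_def Bn_def by auto
  then show ?thesis unfolding conv_def by (simp add: comult_one1)
qed

lemma sum_ind2:
  assumes "finite B" "p \<in> B" "q \<in> B"
  shows "(\<Sum>a\<in>B. \<Sum>b\<in>B. (if a = p then (if b = q then v else 0) else (0::real))) = v"
proof -
  have "(\<Sum>a\<in>B. \<Sum>b\<in>B. (if a = p then (if b = q then v else 0) else (0::real))) = (\<Sum>a\<in>B. if a = p then v else 0)"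
    using assms by (intro sum.cong refl) (auto simp: sum.delta)
  also have "\<dots> = v" using assms by (simp add: sum.delta)
  finally show ?thesis .
qed

lemma decomp: assumes d: "0 < deg \<sigma>"
  shows "conv f g \<sigma> = f \<sigma> * g one + f one * g \<sigma> + red_sum deg comult f g \<sigma>"
proof -
  define B where "B = Ble deg (deg \<sigma>)"
  define Mid where "Mid = {a. 0 < deg a \<and> deg a < deg \<sigma>}"
  define T where "T = (\<lambda>a b. real (comult a b \<sigma>) * f a * g b)"
  have sone: "\<sigma> \<noteq> one" using d by auto
  have pw: "T a b = (if a = \<sigma> then (if b = one then f \<sigma> * g one else 0) else 0)
      + (if a = one then (if b = \<sigma> then f one * g \<sigma> else 0) else 0)
      + (if a \<in> Mid then (if b \<in> Mid then T a b else 0) else 0)" for a b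
  proof (cases "a = one")
    case True
    then show ?thesis using sone unfolding T_def Mid_def by (simp add: comult_one1)
  next
    case a1: False
    show ?thesis
    proof (cases "b = one")
      case True
      then show ?thesis using a1 unfolding T_def Mid_def by (auto simp: comult_one2)
    next
      case b1: False
      have "deg a > 0" "deg b > 0" using a1 b1 deg0_iff by auto
      then have "comult a b \<sigma> \<noteq> 0 \<Longrightarrow> a \<in> Mid \<and> b \<in> Mid" unfolding Mid_def using comult_deg[of a b \<sigma>] by auto
      then show ?thesis using a1 b1 unfolding T_def by auto
    qed
  qed
  have fin: "finite B" unfolding B_def by (rule finBle)
  have mem: "\<sigma> \<in> B" "one \<in> B" unfolding B_def by auto
  have MB: "Mid \<subseteq> B" unfolding Mid_def B_def by auto
  have "conv f g \<sigma> = (\<Sum>a\<in>B. \<Sum>b\<in>B. T a b)" unfolding conv_def B_def T_def ..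
  also have "\<dots> = (\<Sum>a\<in>B. \<Sum>b\<in>B. (if a = \<sigma> then (if b = one then f \<sigma> * g one else 0) else 0))
      + (\<Sum>a\<in>B. \<Sum>b\<in>B. (if a = one then (if b = \<sigma> then f one * g \<sigma> else 0) else 0))
      + (\<Sum>a\<in>B. \<Sum>b\<in>B. (if a \<in> Mid then (if b \<in> Mid then T a b else 0) else 0))"
    by (subst pw) (simp add: sum.distrib)
  also have "(\<Sum>a\<in>B. \<Sum>b\<in>B. (if a \<in> Mid then (if b \<in> Mid then T a b else 0) else 0)) = (\<Sum>a\<in>Mid. \<Sum>b\<in>Mid. T a b)"
  proof -
    have fM: "finite Mid" unfolding Mid_def by (rule finMid)
    have inner: "a \<in> Mid \<Longrightarrow> (\<Sum>b\<in>B. (if a \<in> Mid then (if b \<in> Mid then T a b else 0) else 0)) = (\<Sum>b\<in>Mid. T a b)" for a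
    proof -
      assume a: "a \<in> Mid"
      have "(\<Sum>b\<in>B. (if b \<in> Mid then T a b else 0)) = (\<Sum>b\<in>Mid. (if b \<in> Mid then T a b else 0))"
        by (rule sum_supp_eq[OF fin fM]) (use MB in auto)
      then show ?thesis using a by simp
    qed
    have "(\<Sum>a\<in>B. \<Sum>b\<in>B. (if a \<in> Mid then (if b \<in> Mid then T a b else 0) else 0))
       = (\<Sum>a\<in>Mid. \<Sum>b\<in>B. (if a \<in> Mid then (if b \<in> Mid then T a b else 0) else 0))"
      by (rule sum_supp_eq[OF fin fM]) (use MB in auto)
    also have "\<dots> = (\<Sum>a\<in>Mid. \<Sum>b\<in>Mid. T a b)" using inner by simp
    finally show ?thesis .
  qed
  finally show ?thesis using fin mem unfolding red_sum_def Mid_def T_def by (simp add: sum_ind2)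
qed

lemma conv_eps: "conv eps g \<sigma> = g \<sigma>"
proof (cases "deg \<sigma> = 0")
  case True then have "\<sigma> = one" using deg0_iff by simp
  then show ?thesis by (simp add: conv_one eps_def)
next
  case False
  then have "red_sum deg comult eps g \<sigma> = 0" unfolding red_sum_def eps_def by (intro sum.neutral) auto
  moreover have "\<sigma> \<noteq> one" using False by auto
  ultimately show ?thesis using False by (simp add: decomp eps_def)
qed

lemma conv_cong: assumes "\<And>a. deg a \<le> deg \<sigma> \<Longrightarrow> f a = f' a" "\<And>a. deg a \<le> deg \<sigma> \<Longrightarrow> g a = g' a"
  shows "conv f g \<sigma> = conv f' g' \<sigma>"
  unfolding conv_def using assms by (intro sum.cong refl) auto

lemma red_sum_cong: assumes "\<And>a. 0 < deg a \<Longrightarrow> deg a < deg \<sigma> \<Longrightarrow> f a = f' a" "\<And>a. 0 < deg a \<Longrightarrow> deg a < deg \<sigma> \<Longrightarrow> g a = g' a"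
  shows "red_sum deg comult f g \<sigma> = red_sum deg comult f' g' \<sigma>"
  unfolding red_sum_def using assms by (intro sum.cong refl) auto

lemma Mu_cong: assumes "\<And>c. deg c = deg a + deg b \<Longrightarrow> p c = p' c"
  shows "Mu p a b = Mu p' a b"
  unfolding Mu_def using assms by (intro sum.cong refl) auto

lemma Mu_one1: "Mu p one b = p b"
proof -
  have "Mu p one b = (\<Sum>c\<in>Bn deg (deg b). if c = b then p c else 0)"
    unfolding Mu_def by (intro sum.cong) (auto simp: mult_one1)
  then show ?thesis using finBn by simp
qed

lemma Mu_one2: "Mu p a one = p a"
proof -
  have "Mu p a one = (\<Sum>c\<in>Bn deg (deg a). if c = a then p c else 0)"
    unfolding Mu_def by (intro sum.cong) (auto simp: mult_one2)
  then show ?thesis using finBn by simp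
qed

lemma Mu_conv:
  shows "Mu (conv p q) a b = (\<Sum>a1\<in>Ble deg (deg a). \<Sum>a2\<in>Ble deg (deg a). \<Sum>b1\<in>Ble deg (deg b). \<Sum>b2\<in>Ble deg (deg b).
      real (comult a1 a2 a) * real (comult b1 b2 b) * (Mu p a1 b1 * Mu q a2 b2))"
proof -
  define n where "n = deg a + deg b"
  define B where "B = Ble deg n"
  define A1 where "A1 = Ble deg (deg a)"
  define B1 where "B1 = Ble deg (deg b)"
  have finB: "finite B" unfolding B_def by (rule finBle)
  have cx: "(\<Sum>c\<in>Bn deg n. real (mult a b c) * real (comult x y c))
     = (\<Sum>a1\<in>A1. \<Sum>a2\<in>A1. \<Sum>b1\<in>B1. \<Sum>b2\<in>B1.
          real (comult a1 a2 a) * real (comult b1 b2 b) * real (mult a1 b1 x) * real (mult a2 b2 y))" for x y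
  proof -
    have "real (\<Sum>c\<in>Bn deg (deg a + deg b). mult a b c * comult x y c)
        = real (\<Sum>a1\<in>Ble deg (deg a). \<Sum>a2\<in>Ble deg (deg a).
                   \<Sum>b1\<in>Ble deg (deg b). \<Sum>b2\<in>Ble deg (deg b).
                     comult a1 a2 a * comult b1 b2 b * mult a1 b1 x * mult a2 b2 y)"
      by (simp only: compat_ax)
    then show ?thesis unfolding n_def A1_def B1_def by simp
  qed
  have MuB: "a1 \<in> A1 \<Longrightarrow> b1 \<in> B1 \<Longrightarrow> (\<Sum>x\<in>B. real (mult a1 b1 x) * r x) = Mu r a1 b1" for a1 b1 r
    unfolding Mu_def
    by (rule sum_supp_eq[OF finB finBn]) (use mult_deg in \<open>fastforce simp: B_def A1_def B1_def n_def\<close>)+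
  have "Mu (conv p q) a b = (\<Sum>c\<in>Bn deg n. real (mult a b c) * (\<Sum>x\<in>B. \<Sum>y\<in>B. real (comult x y c) * p x * q y))"
    unfolding Mu_def n_def B_def by (intro sum.cong refl) (simp add: conv_big)
  also have "\<dots> = (\<Sum>c\<in>Bn deg n. \<Sum>x\<in>B. \<Sum>y\<in>B. (real (mult a b c) * real (comult x y c)) * (p x * q y))"
    by (simp add: sum_distrib_left algebra_simps)
  also have "\<dots> = (\<Sum>x\<in>B. \<Sum>c\<in>Bn deg n. \<Sum>y\<in>B. (real (mult a b c) * real (comult x y c)) * (p x * q y))"
    by (rule sum.swap)
  also have "\<dots> = (\<Sum>x\<in>B. \<Sum>y\<in>B. \<Sum>c\<in>Bn deg n. (real (mult a b c) * real (comult x y c)) * (p x * q y))"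
    by (rule sum.cong[OF refl], rule sum.swap)
  also have "\<dots> = (\<Sum>x\<in>B. \<Sum>y\<in>B. (\<Sum>c\<in>Bn deg n. real (mult a b c) * real (comult x y c)) * (p x * q y))"
    by (simp add: sum_distrib_right)
  also have "\<dots> = (\<Sum>x\<in>B. \<Sum>y\<in>B. \<Sum>a1\<in>A1. \<Sum>a2\<in>A1. \<Sum>b1\<in>B1. \<Sum>b2\<in>B1.
          (real (comult a1 a2 a) * real (comult b1 b2 b)) * ((real (mult a1 b1 x) * p x) * (real (mult a2 b2 y) * q y)))"
    unfolding cx sum_distrib_right by (intro sum.cong refl) (simp add: algebra_simps)
  also have "\<dots> = (\<Sum>x\<in>B. \<Sum>a1\<in>A1. \<Sum>a2\<in>A1. \<Sum>b1\<in>B1. \<Sum>b2\<in>B1. \<Sum>y\<in>B.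
          (real (comult a1 a2 a) * real (comult b1 b2 b)) * ((real (mult a1 b1 x) * p x) * (real (mult a2 b2 y) * q y)))"
    by (rule sum.cong[OF refl], rule pull4)
  also have "\<dots> = (\<Sum>a1\<in>A1. \<Sum>a2\<in>A1. \<Sum>b1\<in>B1. \<Sum>b2\<in>B1. \<Sum>x\<in>B. \<Sum>y\<in>B.
          (real (comult a1 a2 a) * real (comult b1 b2 b)) * ((real (mult a1 b1 x) * p x) * (real (mult a2 b2 y) * q y)))"
    by (rule pull4)
  also have "\<dots> = (\<Sum>a1\<in>A1. \<Sum>a2\<in>A1. \<Sum>b1\<in>B1. \<Sum>b2\<in>B1.
          (real (comult a1 a2 a) * real (comult b1 b2 b)) * ((\<Sum>x\<in>B. real (mult a1 b1 x) * p x) * (\<Sum>y\<in>B. real (mult a2 b2 y) * q y)))"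
    by (simp only: sum_product, simp only: sum_distrib_left)
  also have "\<dots> = (\<Sum>a1\<in>A1. \<Sum>a2\<in>A1. \<Sum>b1\<in>B1. \<Sum>b2\<in>B1.
          real (comult a1 a2 a) * real (comult b1 b2 b) * (Mu p a1 b1 * Mu q a2 b2))"
    by (intro sum.cong refl) (simp add: MuB)
  finally show ?thesis unfolding A1_def B1_def .
qed

lemma mult_step:
  assumes p1: "p one = 1" and q1: "q one = 1"
    and pm: "\<And>x y. deg x + deg y < deg a + deg b \<Longrightarrow> Mu p x y = p x * p y"
    and qm: "\<And>x y. deg x + deg y < deg a + deg b \<Longrightarrow> Mu q x y = q x * q y"
    and da: "0 < deg a" and db: "0 < deg b"
  shows "Mu (conv p q) a b - conv p q a * conv p q b = (Mu p a b - p a * p b) + (Mu q a b - q a * q b)"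
proof -
  define A1 where "A1 = Ble deg (deg a)"
  define B1 where "B1 = Ble deg (deg b)"
  have fin: "finite A1" "finite B1" unfolding A1_def B1_def by (rule finBle)+
  have mem: "a \<in> A1" "one \<in> A1" "b \<in> B1" "one \<in> B1" unfolding A1_def B1_def by auto
  have an: "a \<noteq> one" "b \<noteq> one" using da db by auto
  define Dp where "Dp = Mu p a b - p a * p b"
  define Dq where "Dq = Mu q a b - q a * q b"
  have cc: "conv p q a * conv p q b = (\<Sum>a1\<in>A1. \<Sum>a2\<in>A1. \<Sum>b1\<in>B1. \<Sum>b2\<in>B1.
      real (comult a1 a2 a) * real (comult b1 b2 b) * (p a1 * p b1 * (q a2 * q b2)))"
  proof -
    have "conv p q a * conv p q b = (\<Sum>a1\<in>A1. \<Sum>a2\<in>A1. (real (comult a1 a2 a) * p a1 * q a2) * conv p q b)"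
      unfolding conv_def[of p q a] A1_def sum_distrib_right ..
    also have "\<dots> = (\<Sum>a1\<in>A1. \<Sum>a2\<in>A1. \<Sum>b1\<in>B1. \<Sum>b2\<in>B1. (real (comult a1 a2 a) * p a1 * q a2) * (real (comult b1 b2 b) * p b1 * q b2))"
      unfolding conv_def[of p q b] B1_def sum_distrib_left ..
    also have "\<dots> = (\<Sum>a1\<in>A1. \<Sum>a2\<in>A1. \<Sum>b1\<in>B1. \<Sum>b2\<in>B1.
      real (comult a1 a2 a) * real (comult b1 b2 b) * (p a1 * p b1 * (q a2 * q b2)))"
      by (intro sum.cong refl) (simp add: algebra_simps)
    finally show ?thesis .
  qed
  have c1: "comult a one a = 1" "comult b one b = 1" "comult one a a = 1" "comult one b b = 1"
    by (simp_all add: comult_one1 comult_one2)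
  have pw: "real (comult a1 a2 a) * real (comult b1 b2 b) * (Mu p a1 b1 * Mu q a2 b2)
      - real (comult a1 a2 a) * real (comult b1 b2 b) * (p a1 * p b1 * (q a2 * q b2))
    = (if a1 = a \<and> a2 = one \<and> b1 = b \<and> b2 = one then Dp else 0)
      + (if a1 = one \<and> a2 = a \<and> b1 = one \<and> b2 = b then Dq else 0)" for a1 a2 b1 b2
  proof (cases "comult a1 a2 a = 0 \<or> comult b1 b2 b = 0")
    case True
    have c1': "comult a one a = 1" "comult b one b = 1" "comult one a a = 1" "comult one b b = 1"
      by (simp_all add: comult_one1 comult_one2)
    have n1: "\<not> (a1 = a \<and> a2 = one \<and> b1 = b \<and> b2 = one)"
    proof
      assume "a1 = a \<and> a2 = one \<and> b1 = b \<and> b2 = one"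
      then show False using True c1' by (elim conjE) simp
    qed
    have n2: "\<not> (a1 = one \<and> a2 = a \<and> b1 = one \<and> b2 = b)"
    proof
      assume "a1 = one \<and> a2 = a \<and> b1 = one \<and> b2 = b"
      then show False using True c1' by (elim conjE) simp
    qed
    have z: "real (comult a1 a2 a) * real (comult b1 b2 b) = 0" using True by auto
    have "real (comult a1 a2 a) * real (comult b1 b2 b) * (Mu p a1 b1 * Mu q a2 b2)
      - real (comult a1 a2 a) * real (comult b1 b2 b) * (p a1 * p b1 * (q a2 * q b2)) = 0"
      unfolding z by simp
    then show ?thesis using n1 n2 by (simp only: if_False add_0_right)
  next
    case False
    then have d1: "deg a1 + deg a2 = deg a" "deg b1 + deg b2 = deg b" using comult_deg[of a1 a2 a] comult_deg[of b1 b2 b] by simp_all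
    show ?thesis
    proof (cases "deg a2 = 0 \<and> deg b2 = 0")
      case True
      then have o: "a2 = one" "b2 = one" using deg0_iff by auto
      have e: "a1 = a" "b1 = b" using False unfolding o comult_one2 by (meson)+
      have "Mu q one one = 1" using q1 by (simp add: Mu_one1)
      then show ?thesis unfolding o e using an q1 c1 by (simp add: Dp_def)
    next
      case F2: False
      show ?thesis
      proof (cases "deg a1 = 0 \<and> deg b1 = 0")
        case True
        then have o: "a1 = one" "b1 = one" using deg0_iff by auto
        have e: "a2 = a" "b2 = b" using False unfolding o comult_one1 by (meson)+
        have "Mu p one one = 1" using p1 by (simp add: Mu_one1)
        then show ?thesis unfolding o e using an p1 c1 by (simp add: Dq_def)
      next
        case F3: False
        have "deg a1 + deg b1 < deg a + deg b" "deg a2 + deg b2 < deg a + deg b" using d1 F2 F3 by auto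
        then have "Mu p a1 b1 = p a1 * p b1" "Mu q a2 b2 = q a2 * q b2" using pm qm by auto
        moreover have "\<not> (a1 = a \<and> a2 = one \<and> b1 = b \<and> b2 = one)" "\<not> (a1 = one \<and> a2 = a \<and> b1 = one \<and> b2 = b)"
          using F2 F3 by auto
        ultimately show ?thesis by (simp only: if_False diff_self add_0 simp_thms)
      qed
    qed
  qed
  have "Mu (conv p q) a b - conv p q a * conv p q b
    = (\<Sum>a1\<in>A1. \<Sum>a2\<in>A1. \<Sum>b1\<in>B1. \<Sum>b2\<in>B1.
        (real (comult a1 a2 a) * real (comult b1 b2 b) * (Mu p a1 b1 * Mu q a2 b2)
      - real (comult a1 a2 a) * real (comult b1 b2 b) * (p a1 * p b1 * (q a2 * q b2))))"
    unfolding Mu_conv cc A1_def[symmetric] B1_def[symmetric] by (simp add: sum_subtractf)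
  also have "\<dots> = (\<Sum>a1\<in>A1. \<Sum>a2\<in>A1. \<Sum>b1\<in>B1. \<Sum>b2\<in>B1.
        (if a1 = a \<and> a2 = one \<and> b1 = b \<and> b2 = one then Dp else 0))
      + (\<Sum>a1\<in>A1. \<Sum>a2\<in>A1. \<Sum>b1\<in>B1. \<Sum>b2\<in>B1.
        (if a1 = one \<and> a2 = a \<and> b1 = one \<and> b2 = b then Dq else 0))"
    unfolding pw by (simp add: sum.distrib)
  also have "\<dots> = Dp + Dq" using fin mem by (simp add: sum_ind4)
  finally show ?thesis unfolding Dp_def Dq_def .
qed

end

definition hold :: "real \<Rightarrow> (real \<Rightarrow> real \<Rightarrow> real) \<Rightarrow> bool" where
  "hold \<theta> f \<longleftrightarrow> (\<exists>K. \<forall>s t. \<bar>f s t\<bar> \<le> K * \<bar>t-s\<bar> powr \<theta>)"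

lemma hold_nonneg: "hold \<theta> f \<Longrightarrow> \<exists>K\<ge>0. \<forall>s t. \<bar>f s t\<bar> \<le> K * \<bar>t-s\<bar> powr \<theta>"
  unfolding hold_def
proof (elim exE)
  fix K assume K: "\<forall>s t. \<bar>f s t\<bar> \<le> K * \<bar>t - s\<bar> powr \<theta>"
  show "\<exists>K\<ge>0. \<forall>s t. \<bar>f s t\<bar> \<le> K * \<bar>t-s\<bar> powr \<theta>"
  proof (intro exI[of _ "max K 0"] conjI allI)
    fix s t
    have "K * \<bar>t-s\<bar> powr \<theta> \<le> max K 0 * \<bar>t-s\<bar> powr \<theta>" by (intro mult_right_mono) auto
    then show "\<bar>f s t\<bar> \<le> max K 0 * \<bar>t-s\<bar> powr \<theta>" using K by (meson order_trans)
  qed simp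
qed

lemma hold_add: "hold \<theta> f \<Longrightarrow> hold \<theta> g \<Longrightarrow> hold \<theta> (\<lambda>s t. f s t + g s t)"
  unfolding hold_def
proof (elim exE)
  fix K1 K2 assume K1: "\<forall>s t. \<bar>f s t\<bar> \<le> K1 * \<bar>t - s\<bar> powr \<theta>" and K2: "\<forall>s t. \<bar>g s t\<bar> \<le> K2 * \<bar>t - s\<bar> powr \<theta>"
  show "\<exists>K. \<forall>s t. \<bar>f s t + g s t\<bar> \<le> K * \<bar>t - s\<bar> powr \<theta>"
  proof (intro exI[of _ "K1 + K2"] allI)
    fix s t show "\<bar>f s t + g s t\<bar> \<le> (K1 + K2) * \<bar>t - s\<bar> powr \<theta>"
      using K1[rule_format, of s t] K2[rule_format, of s t] by (simp add: algebra_simps)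
  qed
qed

lemma hold_neg: "hold \<theta> f \<Longrightarrow> hold \<theta> (\<lambda>s t. - f s t)"
  unfolding hold_def by simp

lemma hold_scale: "hold \<theta> f \<Longrightarrow> hold \<theta> (\<lambda>s t. r * f s t)"
  unfolding hold_def
proof (elim exE)
  fix K assume K: "\<forall>s t. \<bar>f s t\<bar> \<le> K * \<bar>t - s\<bar> powr \<theta>"
  show "\<exists>K. \<forall>s t. \<bar>r * f s t\<bar> \<le> K * \<bar>t - s\<bar> powr \<theta>"
  proof (intro exI[of _ "\<bar>r\<bar> * K"] allI)
    fix s t show "\<bar>r * f s t\<bar> \<le> (\<bar>r\<bar> * K) * \<bar>t - s\<bar> powr \<theta>"
      using mult_left_mono[OF K[rule_format, of s t], of "\<bar>r\<bar>"] by (simp add: abs_mult mult.assoc)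
  qed
qed

lemma hold_zero: "hold \<theta> (\<lambda>s t. 0)" unfolding hold_def by (intro exI[of _ 0]) simp

lemma hold_sum: "finite S \<Longrightarrow> (\<And>c. c \<in> S \<Longrightarrow> hold \<theta> (f c)) \<Longrightarrow> hold \<theta> (\<lambda>s t. \<Sum>c\<in>S. f c s t)"
proof (induction S rule: finite_induct)
  case empty then show ?case by (simp add: hold_zero)
next
  case (insert x F)
  then show ?case by (simp add: hold_add)
qed

lemma hold_mult: assumes "hold \<theta>1 f" "hold \<theta>2 g" shows "hold (\<theta>1 + \<theta>2) (\<lambda>s t. f s t * g s t)"
proof -
  obtain K1 where K1: "K1 \<ge> 0" "\<forall>s t. \<bar>f s t\<bar> \<le> K1 * \<bar>t-s\<bar> powr \<theta>1" using hold_nonneg[OF assms(1)] by blast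
  obtain K2 where K2: "K2 \<ge> 0" "\<forall>s t. \<bar>g s t\<bar> \<le> K2 * \<bar>t-s\<bar> powr \<theta>2" using hold_nonneg[OF assms(2)] by blast
  show ?thesis unfolding hold_def
  proof (intro exI[of _ "K1 * K2"] allI)
    fix s t
    have "\<bar>f s t * g s t\<bar> \<le> (K1 * \<bar>t-s\<bar> powr \<theta>1) * (K2 * \<bar>t-s\<bar> powr \<theta>2)"
      unfolding abs_mult by (rule mult_mono) (use K1 K2 in auto)
    then show "\<bar>f s t * g s t\<bar> \<le> K1 * K2 * \<bar>t - s\<bar> powr (\<theta>1 + \<theta>2)" by (simp add: powr_add algebra_simps)
  qed
qed

context CH begin

lemma red_sum_bound:
  fixes \<gamma> L :: real
  assumes w: "\<And>a. 0 < deg a \<Longrightarrow> deg a < deg \<sigma> \<Longrightarrow> 0 \<le> w a"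
    and fb: "\<And>a. 0 < deg a \<Longrightarrow> deg a < deg \<sigma> \<Longrightarrow> \<bar>f a\<bar> \<le> w a * L powr (\<gamma> * deg a)"
    and gb: "\<And>a. 0 < deg a \<Longrightarrow> deg a < deg \<sigma> \<Longrightarrow> \<bar>g a\<bar> \<le> w a * L powr (\<gamma> * deg a)"
  shows "\<bar>red_sum deg comult f g \<sigma>\<bar> \<le> red_sum deg comult w w \<sigma> * L powr (\<gamma> * deg \<sigma>)"
proof -
  define M where "M = {a. 0 < deg a \<and> deg a < deg \<sigma>}"
  have "\<bar>red_sum deg comult f g \<sigma>\<bar> \<le> (\<Sum>a\<in>M. \<Sum>b\<in>M. \<bar>real (comult a b \<sigma>) * f a * g b\<bar>)"
    unfolding red_sum_def M_def[symmetric]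
    by (rule order_trans[OF sum_abs]) (intro sum_mono sum_abs)
  also have "\<dots> \<le> (\<Sum>a\<in>M. \<Sum>b\<in>M. real (comult a b \<sigma>) * w a * w b * L powr (\<gamma> * deg \<sigma>))"
  proof (intro sum_mono)
    fix a b assume a: "a \<in> M" and b: "b \<in> M"
    show "\<bar>real (comult a b \<sigma>) * f a * g b\<bar> \<le> real (comult a b \<sigma>) * w a * w b * L powr (\<gamma> * deg \<sigma>)"
    proof (cases "comult a b \<sigma> = 0")
      case True then show ?thesis by simp
    next
      case False
      then have d: "deg a + deg b = deg \<sigma>" by (rule comult_deg)
      have "\<bar>f a\<bar> * \<bar>g b\<bar> \<le> (w a * L powr (\<gamma> * deg a)) * (w b * L powr (\<gamma> * deg b))"
        using a b fb gb w unfolding M_def by (intro mult_mono) auto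
      also have "\<dots> = w a * w b * L powr (\<gamma> * deg \<sigma>)"
        unfolding d[symmetric] by (simp add: powr_add algebra_simps)
      finally have "\<bar>f a\<bar> * \<bar>g b\<bar> \<le> w a * w b * L powr (\<gamma> * deg \<sigma>)" .
      then have "real (comult a b \<sigma>) * (\<bar>f a\<bar> * \<bar>g b\<bar>) \<le> real (comult a b \<sigma>) * (w a * w b * L powr (\<gamma> * deg \<sigma>))"
        by (intro mult_left_mono) auto
      then show ?thesis by (simp add: abs_mult algebra_simps)
    qed
  qed
  also have "\<dots> = red_sum deg comult w w \<sigma> * L powr (\<gamma> * deg \<sigma>)"
    unfolding red_sum_def M_def by (simp add: sum_distrib_right)
  finally show ?thesis .
qed

lemma red_sum_nonneg: "(\<And>a. 0 < deg a \<Longrightarrow> deg a < deg \<sigma> \<Longrightarrow> 0 \<le> w a) \<Longrightarrow> 0 \<le> red_sum deg comult w w \<sigma>"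
  unfolding red_sum_def by (intro sum_nonneg) auto

lemma hold_red:
  fixes \<gamma> :: real
  assumes g0: "\<gamma> \<ge> 0"
    and H: "\<And>a. 0 < deg a \<Longrightarrow> deg a < deg \<sigma> \<Longrightarrow> hold (\<gamma> * deg a) (\<lambda>s t. X s t a)"
  shows "\<exists>C\<ge>0. \<forall>s u t L. \<bar>u-s\<bar> \<le> L \<longrightarrow> \<bar>t-u\<bar> \<le> L \<longrightarrow>
           \<bar>red_sum deg comult (X s u) (X u t) \<sigma>\<bar> \<le> C * L powr (\<gamma> * deg \<sigma>)"
proof -
  define w where "w = (\<lambda>a. SOME K. K \<ge> 0 \<and> (\<forall>s t. \<bar>X s t a\<bar> \<le> K * \<bar>t-s\<bar> powr (\<gamma> * deg a)))"
  have wp: "w a \<ge> 0 \<and> (\<forall>s t. \<bar>X s t a\<bar> \<le> w a * \<bar>t-s\<bar> powr (\<gamma> * deg a))" if "0 < deg a" "deg a < deg \<sigma>" for a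
    unfolding w_def by (rule someI_ex) (rule hold_nonneg[OF H[OF that]])
  show ?thesis
  proof (intro exI[of _ "red_sum deg comult w w \<sigma>"] conjI allI impI)
    show "0 \<le> red_sum deg comult w w \<sigma>" by (rule red_sum_nonneg) (use wp in auto)
    fix s u t L :: real assume L1: "\<bar>u-s\<bar> \<le> L" and L2: "\<bar>t-u\<bar> \<le> L"
    have mono: "\<bar>X x y a\<bar> \<le> w a * L powr (\<gamma> * deg a)" if "0 < deg a" "deg a < deg \<sigma>" "\<bar>y - x\<bar> \<le> L" for x y :: real and a
    proof -
      have "\<bar>X x y a\<bar> \<le> w a * \<bar>y-x\<bar> powr (\<gamma> * deg a)" using wp[OF that(1,2)] by blast
      also have "\<dots> \<le> w a * L powr (\<gamma> * deg a)"
        using wp[OF that(1,2)] that(3) g0 by (intro mult_left_mono powr_mono2) auto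
      finally show ?thesis .
    qed
    show "\<bar>red_sum deg comult (X s u) (X u t) \<sigma>\<bar> \<le> red_sum deg comult w w \<sigma> * L powr (\<gamma> * deg \<sigma>)"
      by (rule red_sum_bound) (use wp mono L1 L2 in auto)
  qed
qed

lemma diag_zero:
  assumes C: "\<And>\<sigma>. deg \<sigma> \<le> n \<Longrightarrow> e \<sigma> = conv e e \<sigma>" and O: "e one = 1"
  shows "0 < deg \<sigma> \<Longrightarrow> deg \<sigma> \<le> n \<Longrightarrow> e \<sigma> = 0"
proof (induction "deg \<sigma>" arbitrary: \<sigma> rule: less_induct)
  case less
  have "red_sum deg comult e e \<sigma> = 0" unfolding red_sum_def
    by (intro sum.neutral ballI) (use less in auto)
  then have "e \<sigma> = 2 * e \<sigma>" using C[OF less.prems(2)] decomp[OF less.prems(1)] O by simp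
  then show ?case by simp
qed

end

context CH begin

lemma qtab_stable: "deg \<sigma> \<le> n \<Longrightarrow> qtab e deg comult n \<sigma> = qtab e deg comult (deg \<sigma>) \<sigma>"
proof (induction n)
  case 0 then show ?case by simp
next
  case (Suc n)
  show ?case
  proof (cases "deg \<sigma> \<le> n")
    case True then show ?thesis using Suc by simp
  next
    case False then have "deg \<sigma> = Suc n" using Suc by simp
    then show ?thesis by simp
  qed
qed

lemma qtab_rec: assumes d: "deg \<sigma> = Suc n" "1 \<le> n"
  shows "qtab e deg comult (deg \<sigma>) \<sigma> = (1 / (2 powr (e (deg \<sigma>)) - 2)) *
     red_sum deg comult (\<lambda>a. qtab e deg comult (deg a) a) (\<lambda>a. qtab e deg comult (deg a) a) \<sigma>"
proof -
  have "red_sum deg comult (qtab e deg comult n) (qtab e deg comult n) \<sigma>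
     = red_sum deg comult (\<lambda>a. qtab e deg comult (deg a) a) (\<lambda>a. qtab e deg comult (deg a) a) \<sigma>"
  proof (rule red_sum_cong)
    fix a assume "0 < deg a" "deg a < deg \<sigma>"
    then show "qtab e deg comult n a = qtab e deg comult (deg a) a" using d by (intro qtab_stable) simp
    then show "qtab e deg comult n a = qtab e deg comult (deg a) a" .
  qed
  moreover have "qtab e deg comult (Suc n) \<sigma> = (1 / (2 powr (e (Suc n)) - 2)) * red_sum deg comult (qtab e deg comult n) (qtab e deg comult n) \<sigma>"
    using d by simp
  ultimately show ?thesis using d by simp
qed

lemma nondeg_split:
  assumes nd: "nondegenerate one deg comult" and d: "2 \<le> deg \<sigma>"
  shows "\<exists>a b. comult a b \<sigma> > 0 \<and> 0 < deg a \<and> deg a < deg \<sigma> \<and> 0 < deg b \<and> deg b < deg \<sigma>"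
proof -
  have "\<not> primitive one comult \<sigma>" using nd d unfolding nondegenerate_def by auto
  then obtain a b where ab: "comult a b \<sigma> \<noteq> (if a = \<sigma> \<and> b = one then 1 else 0) + (if a = one \<and> b = \<sigma> then 1 else 0)"
    unfolding primitive_def by blast
  have so: "\<sigma> \<noteq> one" using d by auto
  have a1: "a \<noteq> one"
  proof
    assume "a = one" then show False using ab so by (simp add: comult_one1)
  qed
  have b1: "b \<noteq> one"
  proof
    assume "b = one" then show False using ab so a1 by (simp add: comult_one2)
  qed
  have c: "comult a b \<sigma> \<noteq> 0" using ab a1 b1 by simp
  have "deg a + deg b = deg \<sigma>" using comult_deg[OF c] .
  moreover have "0 < deg a" "0 < deg b" using a1 b1 deg0_iff by auto
  ultimately show ?thesis using c by (intro exI[of _ a] exI[of _ b]) auto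
qed

lemma red_sum_pos:
  assumes nd: "nondegenerate one deg comult" and d: "2 \<le> deg \<sigma>"
    and w: "\<And>a. 0 < deg a \<Longrightarrow> deg a < deg \<sigma> \<Longrightarrow> 0 < w a"
  shows "0 < red_sum deg comult w w \<sigma>"
proof -
  obtain a b where ab: "comult a b \<sigma> > 0" "0 < deg a" "deg a < deg \<sigma>" "0 < deg b" "deg b < deg \<sigma>"
    using nondeg_split[OF nd d] by blast
  define M where "M = {a. 0 < deg a \<and> deg a < deg \<sigma>}"
  have fM: "finite M" unfolding M_def by (rule finMid)
  have nn: "\<And>x y. x \<in> M \<Longrightarrow> y \<in> M \<Longrightarrow> 0 \<le> real (comult x y \<sigma>) * w x * w y"
  proof -
    fix x y assume "x \<in> M" "y \<in> M"
    then have "0 < w x" "0 < w y" using w unfolding M_def by auto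
    then show "0 \<le> real (comult x y \<sigma>) * w x * w y" by simp
  qed
  have "0 < real (comult a b \<sigma>) * w a * w b" using ab w by auto
  also have "\<dots> \<le> (\<Sum>y\<in>M. real (comult a y \<sigma>) * w a * w y)"
    by (rule member_le_sum) (use ab fM nn in \<open>simp_all add: M_def\<close>)
  also have "\<dots> \<le> (\<Sum>x\<in>M. \<Sum>y\<in>M. real (comult x y \<sigma>) * w x * w y)"
  proof (rule member_le_sum[where f="\<lambda>x. \<Sum>y\<in>M. real (comult x y \<sigma>) * w x * w y"])
    show "a \<in> M" using ab unfolding M_def by simp
    show "finite M" by (rule fM)
    fix x assume "x \<in> M - {a}"
    then show "0 \<le> (\<Sum>y\<in>M. real (comult x y \<sigma>) * w x * w y)" using nn by (intro sum_nonneg) auto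
  qed
  finally show ?thesis unfolding red_sum_def M_def .
qed

lemma qtab_pos:
  assumes nd: "nondegenerate one deg comult" and e: "\<And>m. 2 \<le> m \<Longrightarrow> e m > 1"
  shows "0 < qtab e deg comult (deg \<sigma>) \<sigma>"
proof (induction "deg \<sigma>" arbitrary: \<sigma> rule: less_induct)
  case less
  show ?case
  proof (cases "deg \<sigma> \<le> 1")
    case True
    then have "deg \<sigma> = 0 \<or> deg \<sigma> = Suc 0" by auto
    then show ?thesis
    proof
      assume "deg \<sigma> = 0" then show ?thesis by simp
    next
      assume d: "deg \<sigma> = Suc 0"
      have "qtab e deg comult (Suc 0) \<sigma> = 1" using d by simp
      then show ?thesis unfolding d by simp
    qed
  next
    case False
    define n where "n = deg \<sigma> - 1"
    have n: "deg \<sigma> = Suc n" "1 \<le> n" using False unfolding n_def by auto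
    have p: "2 powr (e (deg \<sigma>)) > (2::real)"
      using powr_less_mono[OF e, of "deg \<sigma>" 2] False by simp
    have r: "0 < red_sum deg comult (\<lambda>a. qtab e deg comult (deg a) a) (\<lambda>a. qtab e deg comult (deg a) a) \<sigma>"
    proof (rule red_sum_pos[OF nd])
      show "2 \<le> deg \<sigma>" using False by simp
      fix a assume "0 < deg a" "deg a < deg \<sigma>"
      then show "0 < qtab e deg comult (deg a) a" using less.hyps[of a] by blast
    qed
    have c: "0 < 1 / (2 powr (e (deg \<sigma>)) - 2)" using p by simp
    show ?thesis unfolding qtab_rec[OF n] by (rule mult_pos_pos[OF c r])
  qed
qed

end

definition sewI :: "real \<Rightarrow> (real \<Rightarrow> real \<Rightarrow> real) \<Rightarrow> real \<Rightarrow> real \<Rightarrow> real" where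
  "sewI \<theta> A = (SOME I. (\<forall>s u t. I s t = I s u + I u t) \<and> (\<exists>K. \<forall>s t. s < t \<longrightarrow> \<bar>A s t - I s t\<bar> \<le> K * (t-s) powr \<theta>))"

lemma sewI_prop:
  assumes "\<theta> > 1" "C \<ge> 0"
    and "\<And>a b c. a \<le> b \<Longrightarrow> b \<le> c \<Longrightarrow> \<bar>A a c - A a b - A b c\<bar> \<le> C * (c-a) powr \<theta>"
  shows "(\<forall>s u t. sewI \<theta> A s t = sewI \<theta> A s u + sewI \<theta> A u t) \<and> (\<exists>K. \<forall>s t. s < t \<longrightarrow> \<bar>A s t - sewI \<theta> A s t\<bar> \<le> K * (t-s) powr \<theta>)"
proof -
  have ex: "\<exists>I. (\<forall>s u t. I s t = I s u + I u t) \<and> (\<exists>K. \<forall>s t. s < t \<longrightarrow> \<bar>A s t - I s t\<bar> \<le> K * (t-s) powr \<theta>)"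
    by (rule sewing[OF assms])
  show ?thesis unfolding sewI_def by (rule someI_ex[OF ex])
qed

locale RP = CH +
  fixes \<gamma> :: real and N :: nat and Y
  assumes g0: "0 < \<gamma>" and g1: "\<gamma> \<le> 1" and Ndef: "N = nat \<lfloor>1/\<gamma>\<rfloor>"
    and TY: "trunc_rough_path \<gamma> N one deg mult comult Y"
begin

lemma N_ge1: "1 \<le> N"
proof -
  have "1 \<le> 1/\<gamma>" using g0 g1 by simp
  then have "1 \<le> \<lfloor>1/\<gamma>\<rfloor>" by (simp add: le_floor_iff)
  from nat_mono[OF this] show ?thesis unfolding Ndef by simp
qed

lemma gN: assumes "N < m" shows "1 < \<gamma> * real m"
proof -
  have "1/\<gamma> < of_int \<lfloor>1/\<gamma>\<rfloor> + 1" using floor_correct[of "1/\<gamma>"] by simp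
  also have "of_int \<lfloor>1/\<gamma>\<rfloor> = real N" unfolding Ndef using g0 by simp
  finally have "1/\<gamma> < real N + 1" .
  also have "\<dots> \<le> real m" using assms by simp
  finally have "1/\<gamma> < real m" .
  then show ?thesis using g0 by (simp add: field_simps)
qed

lemma Y_one: "Y s t one = 1" using TY unfolding trunc_rough_path_def by blast
lemma Y_mult: "deg a + deg b \<le> N \<Longrightarrow> Mu (Y s t) a b = Y s t a * Y s t b"
  using TY unfolding trunc_rough_path_def Mu_def by blast
lemma Y_chen: "deg c \<le> N \<Longrightarrow> Y s t c = conv (Y s u) (Y u t) c"
  using TY unfolding trunc_rough_path_def conv_def by blast
lemma Y_hold0: "deg \<sigma> \<le> N \<Longrightarrow> \<exists>K. \<forall>s t. s \<noteq> t \<longrightarrow> \<bar>Y s t \<sigma>\<bar> \<le> K * \<bar>t - s\<bar> powr (\<gamma> * real (deg \<sigma>))"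
  using TY unfolding trunc_rough_path_def by blast

lemma Y_diag: "0 < deg \<sigma> \<Longrightarrow> deg \<sigma> \<le> N \<Longrightarrow> Y s s \<sigma> = 0"
  by (rule diag_zero[where e="Y s s" and n=N]) (use Y_chen Y_one in auto)

lemma Y_hold: assumes "0 < deg \<sigma>" "deg \<sigma> \<le> N" shows "hold (\<gamma> * deg \<sigma>) (\<lambda>s t. Y s t \<sigma>)"
proof -
  obtain K where K: "\<forall>s t. s \<noteq> t \<longrightarrow> \<bar>Y s t \<sigma>\<bar> \<le> K * \<bar>t - s\<bar> powr (\<gamma> * real (deg \<sigma>))"
    using Y_hold0[OF assms(2)] by blast
  show ?thesis unfolding hold_def
  proof (intro exI[of _ K] allI)
    fix s t show "\<bar>Y s t \<sigma>\<bar> \<le> K * \<bar>t - s\<bar> powr (\<gamma> * real (deg \<sigma>))"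
      using K Y_diag[OF assms, of s] by (cases "s = t") auto
  qed
qed

primrec ext :: "nat \<Rightarrow> real \<Rightarrow> real \<Rightarrow> 'a \<Rightarrow> real" where
  "ext 0 s t \<sigma> = (if deg \<sigma> = 0 then Y s t \<sigma> else 0)"
| "ext (Suc n) s t \<sigma> = (if deg \<sigma> \<le> n then ext n s t \<sigma> else if deg \<sigma> = Suc n then
     (if Suc n \<le> N then Y s t \<sigma> else
       (let A = (\<lambda>s' t'. red_sum deg comult (ext n s' 0) (ext n 0 t') \<sigma> - red_sum deg comult (ext n 0 s') (ext n s' 0) \<sigma>)
        in A s t - sewI (\<gamma> * real (Suc n)) A s t)) else 0)"

definition Aof :: "nat \<Rightarrow> 'a \<Rightarrow> real \<Rightarrow> real \<Rightarrow> real" where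
  "Aof n \<sigma> = (\<lambda>s t. red_sum deg comult (ext n s 0) (ext n 0 t) \<sigma> - red_sum deg comult (ext n 0 s) (ext n s 0) \<sigma>)"

lemma ext_new: "deg \<sigma> = Suc n \<Longrightarrow> N < Suc n \<Longrightarrow>
   ext (Suc n) s t \<sigma> = Aof n \<sigma> s t - sewI (\<gamma> * real (Suc n)) (Aof n \<sigma>) s t"
  unfolding Aof_def by (simp add: Let_def)

lemma ext_low: "deg \<sigma> \<le> n \<Longrightarrow> ext (Suc n) s t \<sigma> = ext n s t \<sigma>" by simp

lemma ext_zero: "n < deg \<sigma> \<Longrightarrow> ext n s t \<sigma> = 0"
  by (induction n) auto

lemma ext_base: "n \<le> N \<Longrightarrow> ext n s t \<sigma> = (if deg \<sigma> \<le> n then Y s t \<sigma> else 0)"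
  by (induction n) auto

lemma ext_stable: "deg \<sigma> \<le> n \<Longrightarrow> ext n s t \<sigma> = ext (deg \<sigma>) s t \<sigma>"
proof (induction n)
  case 0 then show ?case by simp
next
  case (Suc n)
  show ?case
  proof (cases "deg \<sigma> \<le> n")
    case True then show ?thesis using Suc by simp
  next
    case False then have "deg \<sigma> = Suc n" using Suc by simp
    then show ?thesis by (simp only:)
  qed
qed

definition inv :: "nat \<Rightarrow> bool" where
  "inv n \<longleftrightarrow> (\<forall>s t. ext n s t one = 1) \<and>
     (\<forall>s u t \<sigma>. deg \<sigma> \<le> n \<longrightarrow> ext n s t \<sigma> = conv (ext n s u) (ext n u t) \<sigma>) \<and>
     (\<forall>s t a b. deg a + deg b \<le> n \<longrightarrow> Mu (ext n s t) a b = ext n s t a * ext n s t b) \<and>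
     (\<forall>\<sigma>. 0 < deg \<sigma> \<longrightarrow> deg \<sigma> \<le> n \<longrightarrow> hold (\<gamma> * deg \<sigma>) (\<lambda>s t. ext n s t \<sigma>))"

lemma inv_base: assumes n: "n \<le> N" shows "inv n"
  unfolding inv_def
proof (intro conjI allI impI)
  note eb = ext_base[OF n]
  fix s t show "ext n s t one = 1" using eb Y_one by simp
next
  note eb = ext_base[OF n]
  fix s u t \<sigma> assume d: "deg \<sigma> \<le> n"
  have "ext n s t \<sigma> = Y s t \<sigma>" using eb d by simp
  also have "\<dots> = conv (Y s u) (Y u t) \<sigma>" using d n by (intro Y_chen) simp
  also have "\<dots> = conv (ext n s u) (ext n u t) \<sigma>" by (rule conv_cong) (use eb d in auto)
  finally show "ext n s t \<sigma> = conv (ext n s u) (ext n u t) \<sigma>" .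
next
  note eb = ext_base[OF n]
  fix s t a b assume d: "deg a + deg b \<le> n"
  have "Mu (ext n s t) a b = Mu (Y s t) a b" by (rule Mu_cong) (use eb d in auto)
  also have "\<dots> = Y s t a * Y s t b" using d n by (intro Y_mult) simp
  finally show "Mu (ext n s t) a b = ext n s t a * ext n s t b" using eb d by simp
next
  note eb = ext_base[OF n]
  fix \<sigma> assume d: "0 < deg \<sigma>" "deg \<sigma> \<le> n"
  have "hold (\<gamma> * deg \<sigma>) (\<lambda>s t. Y s t \<sigma>)" using d n by (intro Y_hold) auto
  then show "hold (\<gamma> * deg \<sigma>) (\<lambda>s t. ext n s t \<sigma>)" using eb d by simp
qed

end

context RP begin

lemma invD:
  assumes "inv n"
  shows "ext n s t one = 1"
    "deg \<sigma> \<le> n \<Longrightarrow> ext n s t \<sigma> = conv (ext n s u) (ext n u t) \<sigma>"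
    "deg a + deg b \<le> n \<Longrightarrow> Mu (ext n s t) a b = ext n s t a * ext n s t b"
    "0 < deg \<sigma> \<Longrightarrow> deg \<sigma> \<le> n \<Longrightarrow> hold (\<gamma> * deg \<sigma>) (\<lambda>s t. ext n s t \<sigma>)"
  using assms unfolding inv_def by blast+

lemma ext_eps: assumes I: "inv n" and d: "deg b \<le> n" shows "ext n s s b = eps b"
proof (cases "deg b = 0")
  case True then have "b = one" using deg0_iff by simp
  then show ?thesis using invD(1)[OF I] by (simp add: eps_def)
next
  case False
  have "ext n s s b = 0"
    by (rule diag_zero[where e="ext n s s" and n=n]) (use invD(1,2)[OF I] False d in auto)
  moreover have "b \<noteq> one" using False by auto
  ultimately show ?thesis by (simp add: eps_def)
qed

lemma delta_F:
  assumes I: "inv n" and d: "deg \<sigma> = Suc n"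
  shows "red_sum deg comult (ext n s u) (ext n u t) \<sigma> =
     red_sum deg comult (ext n 0 u) (ext n u 0) \<sigma> + red_sum deg comult (ext n s 0) (ext n 0 t) \<sigma>
     - red_sum deg comult (ext n s 0) (ext n 0 u) \<sigma> - red_sum deg comult (ext n u 0) (ext n 0 t) \<sigma>"
proof -
  define U where "U = ext n s 0"
  define V where "V = ext n 0 u"
  define W where "W = ext n u 0"
  define Z where "Z = ext n 0 t"
  define G where "G = conv V W"
  have d0: "0 < deg \<sigma>" using d by simp
  have zs: "U \<sigma> = 0" "V \<sigma> = 0" "W \<sigma> = 0" "Z \<sigma> = 0" unfolding U_def V_def W_def Z_def using d ext_zero by auto
  have os: "U one = 1" "V one = 1" "W one = 1" "Z one = 1" unfolding U_def V_def W_def Z_def using invD(1)[OF I] by auto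
  have ch: "ext n x z a = conv (ext n x y) (ext n y z) a" if "deg a < deg \<sigma>" for x y z a
    using invD(2)[OF I] that d by simp
  have Geps: "G b = eps b" if "deg b \<le> n" for b
  proof -
    have "G b = ext n 0 0 b" unfolding G_def V_def W_def using ch[where x=0 and y=u and z=0 and a=b] that d by simp
    also have "\<dots> = eps b" by (rule ext_eps[OF I that])
    finally show ?thesis .
  qed
  have "red_sum deg comult (ext n s u) (ext n u t) \<sigma> = red_sum deg comult (conv U V) (conv W Z) \<sigma>"
    unfolding U_def V_def W_def Z_def by (rule red_sum_cong) (use ch in auto)
  also have "\<dots> = conv (conv U V) (conv W Z) \<sigma> - conv U V \<sigma> - conv W Z \<sigma>"
    using decomp[OF d0, of "conv U V" "conv W Z"] by (simp add: conv_one os)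
  finally have e1: "red_sum deg comult (ext n s u) (ext n u t) \<sigma> = conv (conv U V) (conv W Z) \<sigma> - conv U V \<sigma> - conv W Z \<sigma>" .
  have e2: "conv U V \<sigma> = red_sum deg comult U V \<sigma>" "conv W Z \<sigma> = red_sum deg comult W Z \<sigma>"
    "conv V W \<sigma> = red_sum deg comult V W \<sigma>"
    using decomp[OF d0] zs os by simp_all
  have "conv (conv U V) (conv W Z) \<sigma> = conv U (conv (conv V W) Z) \<sigma>"
  proof -
    have "conv (conv U V) (conv W Z) \<sigma> = conv U (conv V (conv W Z)) \<sigma>" by (rule conv_assoc)
    also have "\<dots> = conv U (conv (conv V W) Z) \<sigma>"
      by (rule conv_cong) (simp_all add: conv_assoc)
    finally show ?thesis .
  qed
  also have "\<dots> = conv (conv V W) Z \<sigma> + red_sum deg comult U (conv G Z) \<sigma>"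
    using decomp[OF d0, of U "conv G Z"] zs os unfolding G_def by simp
  also have "red_sum deg comult U (conv G Z) \<sigma> = red_sum deg comult U Z \<sigma>"
  proof (rule red_sum_cong)
    fix a assume a: "0 < deg a" "deg a < deg \<sigma>"
    have "conv G Z a = conv eps Z a" by (rule conv_cong) (use a d Geps in auto)
    then show "conv G Z a = Z a" by (simp add: conv_eps)
  qed simp
  also have "conv (conv V W) Z \<sigma> = G \<sigma>"
  proof -
    have "red_sum deg comult G Z \<sigma> = red_sum deg comult eps Z \<sigma>"
      by (rule red_sum_cong) (use d Geps in auto)
    also have "\<dots> = 0" unfolding red_sum_def eps_def by (intro sum.neutral) auto
    finally have "red_sum deg comult G Z \<sigma> = 0" .
    moreover have "G one = 1" unfolding G_def by (simp add: conv_one os)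
    ultimately show ?thesis using decomp[OF d0, of G Z] zs os unfolding G_def by simp
  qed
  finally have "conv (conv U V) (conv W Z) \<sigma> = red_sum deg comult V W \<sigma> + red_sum deg comult U Z \<sigma>"
    unfolding G_def e2 .
  with e1 e2 show ?thesis unfolding U_def V_def W_def Z_def by simp
qed

lemma A_delta: assumes I: "inv n" and d: "deg \<sigma> = Suc n"
  shows "Aof n \<sigma> s t - Aof n \<sigma> s u - Aof n \<sigma> u t = red_sum deg comult (ext n s u) (ext n u t) \<sigma>"
  unfolding Aof_def using delta_F[OF I d, of s u t] by simp

lemma F_bound: assumes I: "inv n" and d: "deg \<sigma> = Suc n"
  shows "\<exists>C\<ge>0. \<forall>s u t L. \<bar>u-s\<bar> \<le> L \<longrightarrow> \<bar>t-u\<bar> \<le> L \<longrightarrow>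
           \<bar>red_sum deg comult (ext n s u) (ext n u t) \<sigma>\<bar> \<le> C * L powr (\<gamma> * real (Suc n))"
proof -
  have "\<exists>C\<ge>0. \<forall>s u t L. \<bar>u-s\<bar> \<le> L \<longrightarrow> \<bar>t-u\<bar> \<le> L \<longrightarrow>
           \<bar>red_sum deg comult (ext n s u) (ext n u t) \<sigma>\<bar> \<le> C * L powr (\<gamma> * deg \<sigma>)"
    by (rule hold_red) (use g0 invD(4)[OF I] d in auto)
  then show ?thesis using d by simp
qed

lemma sew_props: assumes I: "inv n" and d: "deg \<sigma> = Suc n" and N: "N \<le> n"
  shows "(\<forall>s u t. sewI (\<gamma> * real (Suc n)) (Aof n \<sigma>) s t = sewI (\<gamma> * real (Suc n)) (Aof n \<sigma>) s u + sewI (\<gamma> * real (Suc n)) (Aof n \<sigma>) u t)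
    \<and> (\<exists>K. \<forall>s t. s < t \<longrightarrow> \<bar>Aof n \<sigma> s t - sewI (\<gamma> * real (Suc n)) (Aof n \<sigma>) s t\<bar> \<le> K * (t-s) powr (\<gamma> * real (Suc n)))"
proof -
  obtain C where C: "C \<ge> 0" "\<forall>s u t L. \<bar>u-s\<bar> \<le> L \<longrightarrow> \<bar>t-u\<bar> \<le> L \<longrightarrow>
           \<bar>red_sum deg comult (ext n s u) (ext n u t) \<sigma>\<bar> \<le> C * L powr (\<gamma> * real (Suc n))"
    using F_bound[OF I d] by blast
  show ?thesis
  proof (rule sewI_prop[OF _ C(1)])
    show "1 < \<gamma> * real (Suc n)" using N by (intro gN) simp
    fix a b c :: real assume ab: "a \<le> b" "b \<le> c"
    have "\<bar>Aof n \<sigma> a c - Aof n \<sigma> a b - Aof n \<sigma> b c\<bar> = \<bar>red_sum deg comult (ext n a b) (ext n b c) \<sigma>\<bar>"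
      using A_delta[OF I d] by simp
    also have "\<dots> \<le> C * (c - a) powr (\<gamma> * real (Suc n))" using C(2) ab by auto
    finally show "\<bar>Aof n \<sigma> a c - Aof n \<sigma> a b - Aof n \<sigma> b c\<bar> \<le> C * (c - a) powr (\<gamma> * real (Suc n))" .
  qed
qed

lemma ext_one_Suc: "inv n \<Longrightarrow> ext (Suc n) s t one = 1"
  using invD(1) by simp

lemma red_sum_Suc: "deg \<sigma> = Suc n \<Longrightarrow> red_sum deg comult (ext (Suc n) s u) (ext (Suc n) u t) \<sigma> = red_sum deg comult (ext n s u) (ext n u t) \<sigma>"
  by (rule red_sum_cong) auto

lemma chen_new: assumes I: "inv n" and d: "deg \<sigma> = Suc n" and N: "N \<le> n"
  shows "ext (Suc n) s t \<sigma> = conv (ext (Suc n) s u) (ext (Suc n) u t) \<sigma>"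
proof -
  define I where "I = sewI (\<gamma> * real (Suc n)) (Aof n \<sigma>)"
  have add: "I s t = I s u + I u t" using sew_props[OF I d N] unfolding I_def by blast
  have Nn: "N < Suc n" using N by simp
  have "conv (ext (Suc n) s u) (ext (Suc n) u t) \<sigma> = ext (Suc n) s u \<sigma> + ext (Suc n) u t \<sigma> + red_sum deg comult (ext n s u) (ext n u t) \<sigma>"
    using decomp[of \<sigma> "ext (Suc n) s u" "ext (Suc n) u t"] d ext_one_Suc[OF I] red_sum_Suc[OF d] by simp
  also have "\<dots> = (Aof n \<sigma> s u - I s u) + (Aof n \<sigma> u t - I u t) + (Aof n \<sigma> s t - Aof n \<sigma> s u - Aof n \<sigma> u t)"
    unfolding A_delta[OF I d] using ext_new[OF d Nn] unfolding I_def by simp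
  also have "\<dots> = Aof n \<sigma> s t - I s t" using add by simp
  also have "\<dots> = ext (Suc n) s t \<sigma>" using ext_new[OF d Nn] unfolding I_def by simp
  finally show ?thesis by simp
qed

lemma chen_Suc: assumes I: "inv n" and d: "deg \<sigma> \<le> Suc n" and N: "N \<le> n"
  shows "ext (Suc n) s t \<sigma> = conv (ext (Suc n) s u) (ext (Suc n) u t) \<sigma>"
proof (cases "deg \<sigma> \<le> n")
  case True
  have "ext (Suc n) s t \<sigma> = conv (ext n s u) (ext n u t) \<sigma>" using invD(2)[OF I True] True by simp
  also have "\<dots> = conv (ext (Suc n) s u) (ext (Suc n) u t) \<sigma>" by (rule conv_cong) (use True in auto)
  finally show ?thesis .
next
  case False then have "deg \<sigma> = Suc n" using d by simp
  then show ?thesis by (rule chen_new[OF I _ N])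
qed

lemma hold_new: assumes I: "inv n" and d: "deg \<sigma> = Suc n" and N: "N \<le> n"
  shows "hold (\<gamma> * real (Suc n)) (\<lambda>s t. ext (Suc n) s t \<sigma>)"
proof -
  define \<theta> where "\<theta> = \<gamma> * real (Suc n)"
  have Nn: "N < Suc n" using N by simp
  obtain K where K: "\<forall>s t. s < t \<longrightarrow> \<bar>Aof n \<sigma> s t - sewI \<theta> (Aof n \<sigma>) s t\<bar> \<le> K * (t-s) powr \<theta>"
    using sew_props[OF I d N] unfolding \<theta>_def by blast
  obtain C where C: "C \<ge> 0" "\<forall>s u t L. \<bar>u-s\<bar> \<le> L \<longrightarrow> \<bar>t-u\<bar> \<le> L \<longrightarrow>
           \<bar>red_sum deg comult (ext n s u) (ext n u t) \<sigma>\<bar> \<le> C * L powr \<theta>"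
    using F_bound[OF I d] unfolding \<theta>_def by blast
  have ch: "ext (Suc n) s t \<sigma> = ext (Suc n) s u \<sigma> + ext (Suc n) u t \<sigma> + red_sum deg comult (ext n s u) (ext n u t) \<sigma>" for s u t
    using chen_new[OF I d N, of s t u] decomp[of \<sigma> "ext (Suc n) s u" "ext (Suc n) u t"] d ext_one_Suc[OF I] red_sum_Suc[OF d]
    by simp
  have dz: "ext (Suc n) s s \<sigma> = 0" for s
  proof -
    have "red_sum deg comult (ext n s s) (ext n s s) \<sigma> = 0"
      unfolding red_sum_def using d by (intro sum.neutral ballI) (auto simp: ext_eps[OF I] eps_def)
    then show ?thesis using ch[of s s s] by simp
  qed
  have lt: "\<bar>ext (Suc n) s t \<sigma>\<bar> \<le> K * (t-s) powr \<theta>" if "s < t" for s t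
    using K that ext_new[OF d Nn] unfolding \<theta>_def by simp
  show ?thesis unfolding \<theta>_def[symmetric] hold_def
  proof (intro exI[of _ "\<bar>K\<bar> + C"] allI)
    fix s t :: real
    have p0: "0 \<le> \<bar>t - s\<bar> powr \<theta>" by simp
    consider "s < t" | "s = t" | "t < s" by linarith
    then show "\<bar>ext (Suc n) s t \<sigma>\<bar> \<le> (\<bar>K\<bar> + C) * \<bar>t - s\<bar> powr \<theta>"
    proof cases
      case 1
      have ts: "\<bar>t - s\<bar> = t - s" using 1 by simp
      have "K * (t-s) powr \<theta> \<le> (\<bar>K\<bar> + C) * (t-s) powr \<theta>"
        using C(1) by (intro mult_right_mono) auto
      then have "K * (t-s) powr \<theta> \<le> (\<bar>K\<bar> + C) * \<bar>t - s\<bar> powr \<theta>" unfolding ts .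
      then show ?thesis using lt[OF 1] by simp
    next
      case 2 then show ?thesis using dz by simp
    next
      case 3
      have e: "ext (Suc n) s t \<sigma> = - ext (Suc n) t s \<sigma> - red_sum deg comult (ext n s t) (ext n t s) \<sigma>"
        using ch[of s s t] dz[of s] by simp
      have b1: "\<bar>ext (Suc n) t s \<sigma>\<bar> \<le> \<bar>K\<bar> * \<bar>t - s\<bar> powr \<theta>"
        using lt[OF 3] 3 by (smt (verit, ccfv_SIG) abs_minus_commute mult_right_mono p0)
      have b2: "\<bar>red_sum deg comult (ext n s t) (ext n t s) \<sigma>\<bar> \<le> C * \<bar>t - s\<bar> powr \<theta>"
        using C(2) by (auto simp: abs_minus_commute)
      show ?thesis unfolding e using b1 b2 by (simp add: algebra_simps)
    qed
  qed
qed

lemma mult_new: assumes I: "inv n" and d: "deg a + deg b = Suc n" and N: "N \<le> n"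
  shows "Mu (ext (Suc n) s t) a b = ext (Suc n) s t a * ext (Suc n) s t b"
proof (cases "deg a = 0 \<or> deg b = 0")
  case True
  then show ?thesis
  proof
    assume "deg a = 0" then have "a = one" using deg0_iff by simp
    then show ?thesis by (simp only: Mu_one1 ext_one_Suc[OF I] mult_1_left)
  next
    assume "deg b = 0" then have "b = one" using deg0_iff by simp
    then show ?thesis by (simp only: Mu_one2 ext_one_Suc[OF I] mult_1_right)
  qed
next
  case False
  then have da: "0 < deg a" "0 < deg b" "deg a \<le> n" "deg b \<le> n" using d by auto
  define E where "E = ext (Suc n)"
  define D where "D = (\<lambda>s t. Mu (E s t) a b - E s t a * E s t b)"
  have add: "D s t = D s u + D u t" for s u t
  proof -
    have m1: "Mu (E s t) a b = Mu (conv (E s u) (E u t)) a b"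
      unfolding E_def by (rule Mu_cong) (use chen_Suc[OF I _ N] d in auto)
    have m2: "E s t x = conv (E s u) (E u t) x" if "deg x \<le> Suc n" for x
      unfolding E_def using chen_Suc[OF I that N] .
    have "Mu (conv (E s u) (E u t)) a b - conv (E s u) (E u t) a * conv (E s u) (E u t) b
       = (Mu (E s u) a b - E s u a * E s u b) + (Mu (E u t) a b - E u t a * E u t b)"
    proof (rule mult_step)
      show "E s u one = 1" "E u t one = 1" unfolding E_def by (rule ext_one_Suc[OF I])+
      show "0 < deg a" "0 < deg b" using da by auto
    next
      fix x y assume xy: "deg x + deg y < deg a + deg b"
      have "Mu (E s u) x y = Mu (ext n s u) x y" unfolding E_def by (rule Mu_cong) (use xy d in auto)
      also have "\<dots> = ext n s u x * ext n s u y" using invD(3)[OF I] xy d by simp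
      finally show "Mu (E s u) x y = E s u x * E s u y" unfolding E_def using xy d by simp
    next
      fix x y assume xy: "deg x + deg y < deg a + deg b"
      have "Mu (E u t) x y = Mu (ext n u t) x y" unfolding E_def by (rule Mu_cong) (use xy d in auto)
      also have "\<dots> = ext n u t x * ext n u t y" using invD(3)[OF I] xy d by simp
      finally show "Mu (E u t) x y = E u t x * E u t y" unfolding E_def using xy d by simp
    qed
    then show ?thesis unfolding D_def m1 using m2[of a] m2[of b] da by simp
  qed
  have hD: "hold (\<gamma> * real (Suc n)) D"
  proof -
    have h1: "hold (\<gamma> * real (Suc n)) (\<lambda>s t. \<Sum>c\<in>Bn deg (deg a + deg b). real (mult a b c) * E s t c)"
      by (intro hold_sum finBn hold_scale) (use hold_new[OF I _ N] d in \<open>auto simp: E_def\<close>)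
    have ha: "hold (\<gamma> * deg a) (\<lambda>s t. E s t a)" "hold (\<gamma> * deg b) (\<lambda>s t. E s t b)"
      unfolding E_def using invD(4)[OF I] da by simp_all
    have h2: "hold (\<gamma> * deg a + \<gamma> * deg b) (\<lambda>s t. E s t a * E s t b)" by (rule hold_mult[OF ha])
    have e0: "real (deg a) + real (deg b) = real (Suc n)" using d by (metis of_nat_add)
    have e: "\<gamma> * deg a + \<gamma> * deg b = \<gamma> * real (Suc n)" by (simp only: distrib_left[symmetric] e0)
    have "hold (\<gamma> * real (Suc n)) (\<lambda>s t. (\<Sum>c\<in>Bn deg (deg a + deg b). real (mult a b c) * E s t c) + - (E s t a * E s t b))"
      by (rule hold_add[OF h1 hold_neg]) (use h2 e in simp)
    then show ?thesis unfolding D_def Mu_def by simp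
  qed
  obtain K where K: "\<forall>s t. \<bar>D s t\<bar> \<le> K * \<bar>t-s\<bar> powr (\<gamma> * real (Suc n))" using hD unfolding hold_def by blast
  have "D s t = 0"
  proof (rule additive_zero[where Z=D and \<theta>="\<gamma> * real (Suc n)" and K=K])
    show "1 < \<gamma> * real (Suc n)" using N by (intro gN) simp
    show "D s t = D s u + D u t" for s u t by (rule add)
    show "\<bar>D s t\<bar> \<le> K * \<bar>t-s\<bar> powr (\<gamma> * real (Suc n))" if "s \<noteq> t" for s t using K by blast
  qed
  then show ?thesis unfolding D_def E_def by simp
qed

lemma inv_step: assumes I: "inv n" and N: "N \<le> n" shows "inv (Suc n)"
  unfolding inv_def
proof (intro conjI allI impI)
  fix s t show "ext (Suc n) s t one = 1" by (rule ext_one_Suc[OF I])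
next
  fix s u t \<sigma> assume "deg \<sigma> \<le> Suc n"
  then show "ext (Suc n) s t \<sigma> = conv (ext (Suc n) s u) (ext (Suc n) u t) \<sigma>" by (rule chen_Suc[OF I _ N])
next
  fix s t a b assume d: "deg a + deg b \<le> Suc n"
  show "Mu (ext (Suc n) s t) a b = ext (Suc n) s t a * ext (Suc n) s t b"
  proof (cases "deg a + deg b = Suc n")
    case True then show ?thesis by (rule mult_new[OF I _ N])
  next
    case False
    then have d': "deg a + deg b \<le> n" using d by simp
    have "Mu (ext (Suc n) s t) a b = Mu (ext n s t) a b" by (rule Mu_cong) (use d' in auto)
    also have "\<dots> = ext n s t a * ext n s t b" by (rule invD(3)[OF I d'])
    finally show ?thesis using d' by simp
  qed
next
  fix \<sigma> assume d: "0 < deg \<sigma>" "deg \<sigma> \<le> Suc n"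
  show "hold (\<gamma> * deg \<sigma>) (\<lambda>s t. ext (Suc n) s t \<sigma>)"
  proof (cases "deg \<sigma> = Suc n")
    case True then show ?thesis using hold_new[OF I True N] by simp
  next
    case False then have "deg \<sigma> \<le> n" using d by simp
    then show ?thesis using invD(4)[OF I d(1)] by simp
  qed
qed

lemma inv_all: "inv n"
proof (induction n)
  case 0 then show ?case by (rule inv_base) simp
next
  case (Suc n)
  show ?case
  proof (cases "Suc n \<le> N")
    case True then show ?thesis by (rule inv_base)
  next
    case False then show ?thesis using inv_step[OF Suc] by simp
  qed
qed

end

context CH begin

lemma rp_one: "rough_path \<gamma> one deg mult comult X \<Longrightarrow> X s t one = 1"
  unfolding rough_path_def by blast
lemma rp_chen: "rough_path \<gamma> one deg mult comult X \<Longrightarrow> X s t c = conv (X s u) (X u t) c"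
  unfolding rough_path_def conv_def by blast
lemma rp_hold0: "rough_path \<gamma> one deg mult comult X \<Longrightarrow> \<exists>K. \<forall>s t. s \<noteq> t \<longrightarrow> \<bar>X s t \<sigma>\<bar> \<le> K * \<bar>t - s\<bar> powr (\<gamma> * real (deg \<sigma>))"
  unfolding rough_path_def by blast
lemma rp_diag: assumes "rough_path \<gamma> one deg mult comult X" "0 < deg \<sigma>" shows "X s s \<sigma> = 0"
  by (rule diag_zero[where e="X s s" and n="deg \<sigma>"]) (use rp_chen[OF assms(1)] rp_one[OF assms(1)] assms(2) in auto)
lemma rp_hold: assumes X: "rough_path \<gamma> one deg mult comult X" and d: "0 < deg \<sigma>"
  shows "hold (\<gamma> * deg \<sigma>) (\<lambda>s t. X s t \<sigma>)"
proof -
  obtain K where K: "\<forall>s t. s \<noteq> t \<longrightarrow> \<bar>X s t \<sigma>\<bar> \<le> K * \<bar>t - s\<bar> powr (\<gamma> * real (deg \<sigma>))"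
    using rp_hold0[OF X] by blast
  show ?thesis unfolding hold_def
  proof (intro exI[of _ K] allI)
    fix s t show "\<bar>X s t \<sigma>\<bar> \<le> K * \<bar>t - s\<bar> powr (\<gamma> * real (deg \<sigma>))"
      using K rp_diag[OF X d, of s] by (cases "s = t") auto
  qed
qed
lemma rp_split: assumes X: "rough_path \<gamma> one deg mult comult X" and d: "0 < deg \<sigma>"
  shows "X s t \<sigma> = X s u \<sigma> + X u t \<sigma> + red_sum deg comult (X s u) (X u t) \<sigma>"
  using rp_chen[OF X, of s t \<sigma> u] decomp[OF d, of "X s u" "X u t"] rp_one[OF X] by simp

end

context RP begin

definition Xext :: "real \<Rightarrow> real \<Rightarrow> 'a \<Rightarrow> real" where "Xext s t \<sigma> = ext (deg \<sigma>) s t \<sigma>"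

lemma Xext_eq: "deg \<sigma> \<le> n \<Longrightarrow> Xext s t \<sigma> = ext n s t \<sigma>"
  unfolding Xext_def by (rule ext_stable[symmetric])

lemma Xext_rough: "rough_path \<gamma> one deg mult comult Xext"
  unfolding rough_path_def
proof (intro conjI allI)
  fix s t show "Xext s t one = 1" using Xext_eq[of one 0] invD(1)[OF inv_all] by simp
next
  fix s t a b
  define n where "n = deg a + deg b"
  have "(\<Sum>c\<in>Bn deg (deg a + deg b). real (mult a b c) * Xext s t c) = Mu (ext n s t) a b"
    unfolding Mu_def n_def by (intro sum.cong refl) (simp add: Xext_eq)
  also have "\<dots> = ext n s t a * ext n s t b" by (rule invD(3)[OF inv_all]) (simp add: n_def)
  also have "\<dots> = Xext s t a * Xext s t b" using Xext_eq[of a n] Xext_eq[of b n] unfolding n_def by simp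
  finally show "(\<Sum>c\<in>Bn deg (deg a + deg b). real (mult a b c) * Xext s t c) = Xext s t a * Xext s t b" .
next
  fix s u t c
  define n where "n = deg c"
  have "Xext s t c = ext n s t c" unfolding n_def Xext_def ..
  also have "\<dots> = conv (ext n s u) (ext n u t) c" by (rule invD(2)[OF inv_all]) (simp add: n_def)
  also have "\<dots> = conv (Xext s u) (Xext u t) c" by (rule conv_cong) (simp_all add: Xext_eq n_def)
  finally show "Xext s t c = (\<Sum>a\<in>Ble deg (deg c). \<Sum>b\<in>Ble deg (deg c). real (comult a b c) * Xext s u a * Xext u t b)"
    unfolding conv_def .
next
  fix \<sigma>
  show "\<exists>K. \<forall>s t. s \<noteq> t \<longrightarrow> \<bar>Xext s t \<sigma>\<bar> \<le> K * \<bar>t - s\<bar> powr (\<gamma> * real (deg \<sigma>))"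
  proof (cases "deg \<sigma> = 0")
    case True
    then have "\<sigma> = one" using deg0_iff by simp
    then show ?thesis using Xext_eq[of one 0] invD(1)[OF inv_all] True by (intro exI[of _ 1]) auto
  next
    case False
    have "hold (\<gamma> * deg \<sigma>) (\<lambda>s t. ext (deg \<sigma>) s t \<sigma>)" by (rule invD(4)[OF inv_all]) (use False in auto)
    then show ?thesis unfolding hold_def Xext_def by blast
  qed
qed

lemma Xext_extends: "extends_trunc N deg Xext Y"
  unfolding extends_trunc_def Xext_def using ext_base by simp

lemma unique:
  assumes X1: "rough_path \<gamma> one deg mult comult X1" and E1: "extends_trunc N deg X1 Y"
    and X2: "rough_path \<gamma> one deg mult comult X2" and E2: "extends_trunc N deg X2 Y"
  shows "X1 s t \<sigma> = X2 s t \<sigma>"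
proof (induction "deg \<sigma>" arbitrary: \<sigma> s t rule: less_induct)
  case less
  show ?case
  proof (cases "deg \<sigma> \<le> N")
    case True then show ?thesis using E1 E2 unfolding extends_trunc_def by simp
  next
    case False
    then have d: "0 < deg \<sigma>" "N < deg \<sigma>" by auto
    define Z where "Z = (\<lambda>s t. X1 s t \<sigma> - X2 s t \<sigma>)"
    have add: "Z s t = Z s u + Z u t" for s u t
    proof -
      have "red_sum deg comult (X1 s u) (X1 u t) \<sigma> = red_sum deg comult (X2 s u) (X2 u t) \<sigma>"
        by (rule red_sum_cong) (use less in auto)
      then show ?thesis unfolding Z_def using rp_split[OF X1 d(1), of s t u] rp_split[OF X2 d(1), of s t u] by simp
    qed
    have "hold (\<gamma> * deg \<sigma>) (\<lambda>s t. X1 s t \<sigma> + - X2 s t \<sigma>)"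
      by (intro hold_add hold_neg rp_hold[OF X1 d(1)] rp_hold[OF X2 d(1)])
    then obtain K where K: "\<forall>s t. \<bar>Z s t\<bar> \<le> K * \<bar>t-s\<bar> powr (\<gamma> * deg \<sigma>)" unfolding hold_def Z_def by auto
    have "Z s t = 0"
    proof (rule additive_zero[where Z=Z and \<theta>="\<gamma> * deg \<sigma>" and K=K])
      show "1 < \<gamma> * real (deg \<sigma>)" using d by (intro gN) simp
      show "Z s t = Z s u + Z u t" for s u t by (rule add)
      show "\<bar>Z s t\<bar> \<le> K * \<bar>t-s\<bar> powr (\<gamma> * deg \<sigma>)" if "s \<noteq> t" for s t using K by blast
    qed
    then show ?thesis unfolding Z_def by simp
  qed
qed

end

context RP begin

lemma qg_pos: assumes nd: "nondegenerate one deg comult" shows "0 < qgamma \<gamma> N deg comult \<sigma>"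
  unfolding qgamma_def
proof (rule qtab_pos[OF nd])
  fix m :: nat assume m: "2 \<le> m"
  show "1 < (if m \<le> N then real m else \<gamma> * real m)"
    using m gN[of m] by auto
qed

lemma qg_one: "qgamma \<gamma> N deg comult one = 1" unfolding qgamma_def by simp

lemma qg_rec: assumes d: "N < deg \<sigma>"
  shows "qgamma \<gamma> N deg comult \<sigma> = 1 / (2 powr (\<gamma> * deg \<sigma>) - 2) * red_sum deg comult (qgamma \<gamma> N deg comult) (qgamma \<gamma> N deg comult) \<sigma>"
proof -
  define n where "n = deg \<sigma> - 1"
  have n: "deg \<sigma> = Suc n" "1 \<le> n" using d N_ge1 unfolding n_def by auto
  have "qgamma \<gamma> N deg comult \<sigma> = 1 / (2 powr ((\<lambda>m. if m \<le> N then real m else \<gamma> * real m) (deg \<sigma>)) - 2) *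
     red_sum deg comult (\<lambda>a. qtab (\<lambda>m. if m \<le> N then real m else \<gamma> * real m) deg comult (deg a) a)
        (\<lambda>a. qtab (\<lambda>m. if m \<le> N then real m else \<gamma> * real m) deg comult (deg a) a) \<sigma>"
    unfolding qgamma_def by (rule qtab_rec[OF n])
  then show ?thesis using d unfolding qgamma_def[abs_def] by simp
qed

lemma bound:
  assumes nd: "nondegenerate one deg comult" and X: "rough_path \<gamma> one deg mult comult X"
  shows "\<exists>c>0. \<forall>s t \<sigma>. \<bar>X s t \<sigma>\<bar> \<le> c ^ deg \<sigma> * qgamma \<gamma> N deg comult \<sigma> * hpow \<bar>t - s\<bar> (\<gamma> * real (deg \<sigma>))"
proof -
  define qg where "qg = qgamma \<gamma> N deg comult"
  have qp: "0 < qg \<sigma>" for \<sigma> unfolding qg_def by (rule qg_pos[OF nd])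
  define S where "S = {\<sigma>. 0 < deg \<sigma> \<and> deg \<sigma> \<le> N}"
  have fS: "finite S" unfolding S_def by (rule finite_subset[OF _ finBle[of N]]) auto
  define Kf where "Kf = (\<lambda>\<sigma>. SOME K. K \<ge> 0 \<and> (\<forall>s t. \<bar>X s t \<sigma>\<bar> \<le> K * \<bar>t-s\<bar> powr (\<gamma> * deg \<sigma>)))"
  have Kf: "Kf \<sigma> \<ge> 0 \<and> (\<forall>s t. \<bar>X s t \<sigma>\<bar> \<le> Kf \<sigma> * \<bar>t-s\<bar> powr (\<gamma> * deg \<sigma>))" if "0 < deg \<sigma>" for \<sigma>
    unfolding Kf_def by (rule someI_ex) (rule hold_nonneg[OF rp_hold[OF X that]])
  define c where "c = Max (insert 1 ((\<lambda>\<sigma>. Kf \<sigma> / qg \<sigma>) ` S))"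
  have c1: "1 \<le> c" unfolding c_def using fS by simp
  have cK: "Kf \<sigma> \<le> c * qg \<sigma>" if "\<sigma> \<in> S" for \<sigma>
  proof -
    have "Kf \<sigma> / qg \<sigma> \<le> c" unfolding c_def using fS that by (intro Max_ge) auto
    then show ?thesis using qp[of \<sigma>] by (simp add: divide_le_eq)
  qed
  have claim: "\<forall>s t. \<bar>X s t \<sigma>\<bar> \<le> c ^ deg \<sigma> * qg \<sigma> * \<bar>t-s\<bar> powr (\<gamma> * deg \<sigma>)" if "0 < deg \<sigma>" for \<sigma>
    using that
  proof (induction "deg \<sigma>" arbitrary: \<sigma> rule: less_induct)
    case less
    show ?case
    proof (cases "deg \<sigma> \<le> N")
      case True
      then have sS: "\<sigma> \<in> S" unfolding S_def using less.prems by simp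
      have "c * qg \<sigma> \<le> c ^ deg \<sigma> * qg \<sigma>"
        using c1 less.prems qp[of \<sigma>] power_increasing[of 1 "deg \<sigma>" c] by (intro mult_right_mono) auto
      then have "Kf \<sigma> \<le> c ^ deg \<sigma> * qg \<sigma>" using cK[OF sS] by linarith
      then show ?thesis using Kf[OF less.prems]
        by (meson mult_right_mono order_trans powr_ge_zero)
    next
      case False
      define d where "d = deg \<sigma>"
      define \<theta> where "\<theta> = \<gamma> * real d"
      have th: "1 < \<theta>" unfolding \<theta>_def d_def using False by (intro gN) simp
      define R where "R = red_sum deg comult qg qg \<sigma>"
      define B where "B = c ^ d * R / 2 powr \<theta>"
      define w where "w = (\<lambda>a. c ^ deg a * qg a)"
      have R0: "0 \<le> R" unfolding R_def by (rule red_sum_nonneg) (use qp in \<open>auto intro: less_imp_le\<close>)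
      have B0: "0 \<le> B" unfolding B_def using R0 c1 by simp
      have Rw: "red_sum deg comult w w \<sigma> = c ^ d * R"
        unfolding R_def red_sum_def w_def d_def sum_distrib_left
      proof (intro sum.cong refl)
        fix a b
        show "real (comult a b \<sigma>) * (c ^ deg a * qg a) * (c ^ deg b * qg b) = c ^ deg \<sigma> * (real (comult a b \<sigma>) * qg a * qg b)"
        proof (cases "comult a b \<sigma> = 0")
          case True then show ?thesis by simp
        next
          case F: False
          have "c ^ deg \<sigma> = c ^ deg a * c ^ deg b" using comult_deg[OF F] by (metis power_add)
          then show ?thesis by (simp add: algebra_simps)
        qed
      qed
      obtain K where K: "\<forall>s t. \<bar>X s t \<sigma>\<bar> \<le> K * \<bar>t-s\<bar> powr \<theta>"
        using rp_hold[OF X less.prems] unfolding hold_def \<theta>_def d_def by blast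
      have Fb: "\<bar>red_sum deg comult (X s ((s+t)/2)) (X ((s+t)/2) t) \<sigma>\<bar> \<le> B * \<bar>t-s\<bar> powr \<theta>" for s t
      proof -
        define m where "m = (s+t)/2"
        have ms: "\<bar>m - s\<bar> = \<bar>t-s\<bar>/2" "\<bar>t - m\<bar> = \<bar>t-s\<bar>/2"
        proof -
          have e: "m - s = (t-s)/2" "t - m = (t-s)/2" unfolding m_def by (simp_all add: field_simps)
          show "\<bar>m - s\<bar> = \<bar>t-s\<bar>/2" unfolding e(1) by simp
          show "\<bar>t - m\<bar> = \<bar>t-s\<bar>/2" unfolding e(2) by simp
        qed
        have "\<bar>red_sum deg comult (X s m) (X m t) \<sigma>\<bar> \<le> red_sum deg comult w w \<sigma> * (\<bar>t-s\<bar>/2) powr (\<gamma> * deg \<sigma>)"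
        proof (rule red_sum_bound)
          fix a assume a: "0 < deg a" "deg a < deg \<sigma>"
          show "0 \<le> w a" unfolding w_def using c1 qp[of a] by simp
          show "\<bar>X s m a\<bar> \<le> w a * (\<bar>t - s\<bar> / 2) powr (\<gamma> * deg a)"
            using less.hyps[OF a(2) a(1)] ms unfolding w_def by metis
          show "\<bar>X m t a\<bar> \<le> w a * (\<bar>t - s\<bar> / 2) powr (\<gamma> * deg a)"
            using less.hyps[OF a(2) a(1)] ms unfolding w_def by metis
        qed
        also have "\<dots> = B * \<bar>t-s\<bar> powr \<theta>"
          unfolding Rw B_def \<theta>_def d_def by (simp add: powr_divide)
        finally show ?thesis unfolding m_def .
      qed
      have "\<bar>X s t \<sigma>\<bar> \<le> B / (1 - 2 powr (1-\<theta>)) * \<bar>t-s\<bar> powr \<theta>" for s t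
      proof (rule dyadic_bound[where Z="\<lambda>s t. X s t \<sigma>" and F="\<lambda>s t. red_sum deg comult (X s ((s+t)/2)) (X ((s+t)/2) t) \<sigma>" and K=K])
        show "1 < \<theta>" by (rule th)
        show "0 \<le> B" by (rule B0)
        show "X s t \<sigma> = X s ((s + t) / 2) \<sigma> + X ((s + t) / 2) t \<sigma> + red_sum deg comult (X s ((s + t) / 2)) (X ((s + t) / 2) t) \<sigma>" for s t
          by (rule rp_split[OF X less.prems])
        show "\<bar>red_sum deg comult (X s ((s + t) / 2)) (X ((s + t) / 2) t) \<sigma>\<bar> \<le> B * \<bar>t - s\<bar> powr \<theta>" for s t by (rule Fb)
        show "\<bar>X s t \<sigma>\<bar> \<le> K * \<bar>t - s\<bar> powr \<theta>" for s t using K by blast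
      qed
      moreover have "B / (1 - 2 powr (1-\<theta>)) = c ^ deg \<sigma> * qg \<sigma>"
      proof -
        have p: "2 powr \<theta> * 2 powr (1 - \<theta>) = (2::real)" by (simp add: powr_add[symmetric])
        have p2: "2 powr \<theta> > (2::real)" using powr_less_mono[OF th, of 2] by simp
        have "qg \<sigma> = 1 / (2 powr \<theta> - 2) * R" unfolding qg_def R_def \<theta>_def d_def
          using qg_rec[of \<sigma>] False by (simp add: qg_def)
        moreover have "2 powr \<theta> * (1 - 2 powr (1-\<theta>)) = 2 powr \<theta> - 2" using p by (simp add: algebra_simps)
        moreover have "B / (1 - 2 powr (1-\<theta>)) = c ^ d * R / (2 powr \<theta> * (1 - 2 powr (1-\<theta>)))"
          unfolding B_def by (simp add: divide_divide_eq_left)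
        ultimately show ?thesis unfolding d_def by simp
      qed
      ultimately show ?thesis unfolding \<theta>_def d_def by simp
    qed
  qed
  show ?thesis
  proof (intro exI[of _ c] conjI allI)
    show "0 < c" using c1 by simp
    fix s t \<sigma>
    show "\<bar>X s t \<sigma>\<bar> \<le> c ^ deg \<sigma> * qgamma \<gamma> N deg comult \<sigma> * hpow \<bar>t - s\<bar> (\<gamma> * real (deg \<sigma>))"
    proof (cases "deg \<sigma> = 0")
      case True
      then have "\<sigma> = one" using deg0_iff by simp
      then show ?thesis using rp_one[OF X] by (simp add: hpow_def qg_one)
    next
      case False
      then have "\<gamma> * real (deg \<sigma>) \<noteq> 0" using g0 by simp
      then show ?thesis using claim[of \<sigma>] False unfolding qg_def hpow_def by simp
    qed
  qed
qed

end

theorem mainTheorem3: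
  fixes one :: 'b and deg :: "'b \<Rightarrow> nat" and mult comult :: "'b \<Rightarrow> 'b \<Rightarrow> 'b \<Rightarrow> nat"
    and \<gamma> :: real and N :: nat and Y :: "real \<Rightarrow> real \<Rightarrow> 'b \<Rightarrow> real"
  assumes "comb_hopf one deg mult comult"
    and "commutative_hopf mult"
    and "nondegenerate one deg comult"
    and "0 < \<gamma>" and "\<gamma> \<le> 1"
    and "N = nat \<lfloor>1 / \<gamma>\<rfloor>"
    and "trunc_rough_path \<gamma> N one deg mult comult Y"
  shows "(\<exists>!X. rough_path \<gamma> one deg mult comult X \<and> extends_trunc N deg X Y)
       \<and> (\<forall>X. rough_path \<gamma> one deg mult comult X \<and> extends_trunc N deg X Y \<longrightarrow>
            (\<exists>c>0. \<forall>s t \<sigma>. \<bar>X s t \<sigma>\<bar> \<le> c ^ deg \<sigma> * qgamma \<gamma> N deg comult \<sigma>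
                                          * hpow \<bar>t - s\<bar> (\<gamma> * real (deg \<sigma>))))"
  proof -
  interpret RP one deg mult comult \<gamma> N Y
    by unfold_locales (use assms in auto)
  show ?thesis
  proof (intro conjI allI impI)
    show "\<exists>!X. rough_path \<gamma> one deg mult comult X \<and> extends_trunc N deg X Y"
    proof (rule ex1I[of _ Xext])
      show "rough_path \<gamma> one deg mult comult Xext \<and> extends_trunc N deg Xext Y"
        using Xext_rough Xext_extends by simp
      fix X assume X: "rough_path \<gamma> one deg mult comult X \<and> extends_trunc N deg X Y"
      show "X = Xext"
        using unique[of X Xext] X Xext_rough Xext_extends by (intro ext) blast
    qed
  next
    fix X assume X: "rough_path \<gamma> one deg mult comult X \<and> extends_trunc N deg X Y"
    show "\<exists>c>0. \<forall>s t \<sigma>. \<bar>X s t \<sigma>\<bar> \<le> c ^ deg \<sigma> * qgamma \<gamma> N deg comult \<sigma>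
                                          * hpow \<bar>t - s\<bar> (\<gamma> * real (deg \<sigma>))"
      by (rule bound) (use assms X in auto)
  qed
qed

end
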